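(* Let $A,B,E$ be finite-dimensional, $U:\mathcal{H}_A\to\mathcal{H}_B\otimes\mathcal{H}_E$ an isometry and $V:\mathcal{H}_A\to\mathcal{H}_B\otimes\mathcal{H}_E$ a linear operator, with $\mathcal{U}(X)=UXU^\dagger$, $\mathcal{V}(X)=VXV^\dagger$. For every $n\ge1$, the sets $\mathsf{A}_n$ and $\mathsf{B}_n$ defined in the context are convex.
   Context: Let $A_i\cong A$, $B_i\cong B$, $E_i\cong E$ for $i=1,\dots,n$, let $R_0,E_0$ be trivial (one-dimensional) and $R_1,\dots,R_n$ finite-dimensional systems of arbitrary dimension. For quantum channels (CPTP maps) $\mathcal{P}^i$ from $R_{i-1}E_{i-1}$ to $A_iR_i$, set $\rho[\{\mathcal{P}^i\}_{i=1}^n]=\operatorname{tr}_{R_nE_n}\,\mathcal{U}_{A_n\to B_nE_n}\circ\mathcal{P}^n\circ\cdots\circ\mathcal{U}_{A_1\to B_1E_1}\circ\mathcal{P}^1$ (applied to the trivial input $1$), an operator on $B_1\cdots B_n$; similarly $\sigma[\{\mathcal{Q}^i\}_{i=1}^n]=\operatorname{tr}_{R_nE_n}\,\mathcal{V}\circ\mathcal{Q}^n\circ\cdots\circ\mathcal{V}\circ\mathcal{Q}^1$ for quantum channels $\mathcal{Q}^i$ from $R_{i-1}E_{i-1}$ to $A_iR_i$. $\mathsf{A}_n$ is the set of all $\rho[\{\mathcal{P}^i\}]$ and $\mathsf{B}_n$ the set of all $\sigma[\{\mathcal{Q}^i\}]$, ranging over all dimensions of the $R_i$ and all such channels. *)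

theory Defs
  imports "HOL-Analysis.Analysis" "Jordan_Normal_Form.Matrix"
begin

text \<open>Operators on a d-dimensional Hilbert space are complex d x d matrices.
Tensor-product index convention: for a factor of dimension p and one of dimension s,
the basis pair (a,b) has index a*s+b.\<close>

definition mtrace :: "complex mat \<Rightarrow> complex" where
  "mtrace X = (\<Sum>i<dim_row X. X $$ (i,i))"

definition dagger :: "complex mat \<Rightarrow> complex mat" where
  "dagger A = mat (dim_col A) (dim_row A) (\<lambda>(i,j). cnj (A $$ (j,i)))"

definition kron :: "complex mat \<Rightarrow> complex mat \<Rightarrow> complex mat" where
  "kron A B = mat (dim_row A * dim_row B) (dim_col A * dim_col B)
     (\<lambda>(i,j). A $$ (i div dim_row B, j div dim_col B) * B $$ (i mod dim_row B, j mod dim_col B))"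

definition psd :: "nat \<Rightarrow> complex mat \<Rightarrow> bool" where
  "psd d X \<longleftrightarrow> X \<in> carrier_mat d d \<and>
     (\<forall>v \<in> carrier_vec d.
        (\<Sum>i<d. \<Sum>j<d. cnj (v $ i) * X $$ (i,j) * v $ j) \<in> \<real> \<and>
        0 \<le> Re (\<Sum>i<d. \<Sum>j<d. cnj (v $ i) * X $$ (i,j) * v $ j))"

text \<open>(id_m \<otimes> Phi)(X) for X an operator on C^m \<otimes> C^din, Phi from din to dout.\<close>
definition lift_map :: "nat \<Rightarrow> nat \<Rightarrow> nat \<Rightarrow> (complex mat \<Rightarrow> complex mat) \<Rightarrow> complex mat \<Rightarrow> complex mat" where
  "lift_map m din dout Phi X = mat (m * dout) (m * dout)
     (\<lambda>(i,j). Phi (mat din din (\<lambda>(k,l). X $$ ((i div dout) * din + k, (j div dout) * din + l)))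
              $$ (i mod dout, j mod dout))"

definition cptp :: "nat \<Rightarrow> nat \<Rightarrow> (complex mat \<Rightarrow> complex mat) \<Rightarrow> bool" where
  "cptp din dout Phi \<longleftrightarrow>
     (\<forall>X \<in> carrier_mat din din. Phi X \<in> carrier_mat dout dout) \<and>
     (\<forall>X \<in> carrier_mat din din. \<forall>Y \<in> carrier_mat din din. Phi (X + Y) = Phi X + Phi Y) \<and>
     (\<forall>c. \<forall>X \<in> carrier_mat din din. Phi (c \<cdot>\<^sub>m X) = c \<cdot>\<^sub>m Phi X) \<and>
     (\<forall>X \<in> carrier_mat din din. mtrace (Phi X) = mtrace X) \<and>
     (\<forall>k X. psd (k * din) X \<longrightarrow> psd (k * dout) (lift_map k din dout Phi X))"

text \<open>Partial trace over the last factor (dimension k) of C^m \<otimes> C^k.\<close>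
definition ptrace :: "nat \<Rightarrow> nat \<Rightarrow> complex mat \<Rightarrow> complex mat" where
  "ptrace m k X = mat m m (\<lambda>(i,j). \<Sum>l<k. X $$ (i * k + l, j * k + l))"

text \<open>Dimension of the memory system E_i R_i (ordered as E_i \<otimes> R_i); E_0 R_0 is trivial.\<close>
definition reg_dim :: "nat \<Rightarrow> (nat \<Rightarrow> nat) \<Rightarrow> nat \<Rightarrow> nat" where
  "reg_dim dE r i = (if i = 0 then 1 else dE * r i)"

text \<open>State on B_1...B_i \<otimes> E_i \<otimes> R_i after i rounds, where round i applies the channel
P i : E_{i-1}R_{i-1} \<rightarrow> A_i R_i followed by X \<mapsto> W X W^\<dagger> on A_i (W : A \<rightarrow> B \<otimes> E).\<close>
fun seq_state :: "nat \<Rightarrow> nat \<Rightarrow> nat \<Rightarrow> complex mat \<Rightarrow> (nat \<Rightarrow> nat)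
                   \<Rightarrow> (nat \<Rightarrow> complex mat \<Rightarrow> complex mat) \<Rightarrow> nat \<Rightarrow> complex mat" where
  "seq_state dA dB dE W r P 0 = 1\<^sub>m 1"
| "seq_state dA dB dE W r P (Suc i) =
     (let X = lift_map (dB ^ i) (reg_dim dE r i) (dA * r (Suc i)) (P (Suc i))
                (seq_state dA dB dE W r P i);
          W' = kron (kron (1\<^sub>m (dB ^ i)) W) (1\<^sub>m (r (Suc i)))
      in W' * X * dagger W')"

text \<open>rho[{P^i}] = tr_{R_n E_n} (W-conjugation \<circ> P^n \<circ> ... \<circ> W-conjugation \<circ> P^1)(1).\<close>
definition seq_output :: "nat \<Rightarrow> nat \<Rightarrow> nat \<Rightarrow> complex mat \<Rightarrow> (nat \<Rightarrow> nat)
                   \<Rightarrow> (nat \<Rightarrow> complex mat \<Rightarrow> complex mat) \<Rightarrow> nat \<Rightarrow> complex mat" where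
  "seq_output dA dB dE W r P n = ptrace (dB ^ n) (reg_dim dE r n) (seq_state dA dB dE W r P n)"

text \<open>The set of all outputs, over all dimensions r_1..r_n \<ge> 1 and all channels.
With W = U this is A_n, with W = V it is B_n.\<close>
definition seq_set :: "nat \<Rightarrow> nat \<Rightarrow> nat \<Rightarrow> complex mat \<Rightarrow> nat \<Rightarrow> complex mat set" where
  "seq_set dA dB dE W n = {seq_output dA dB dE W r P n | r P.
      \<forall>i. 1 \<le> i \<and> i \<le> n \<longrightarrow> 0 < r i \<and> cptp (reg_dim dE r (i - 1)) (dA * r i) (P i)}"

definition convex_mat_set :: "complex mat set \<Rightarrow> bool" where
  "convex_mat_set S \<longleftrightarrow> (\<forall>x \<in> S. \<forall>y \<in> S. \<forall>t::real. 0 \<le> t \<and> t \<le> 1 \<longrightarrow>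
      complex_of_real t \<cdot>\<^sub>m x + complex_of_real (1 - t) \<cdot>\<^sub>m y \<in> S)"

end

theory Submission imports Defs begin
no_notation vec_nth (infixl "$" 90)

definition qf :: "nat \<Rightarrow> complex mat \<Rightarrow> complex vec \<Rightarrow> complex" where
  "qf d X v = (\<Sum>i<d. \<Sum>j<d. cnj (v $ i) * X $$ (i,j) * v $ j)"

lemma psd_qf: "psd d X \<longleftrightarrow> X \<in> carrier_mat d d \<and> (\<forall>v \<in> carrier_vec d. qf d X v \<in> \<real> \<and> 0 \<le> Re (qf d X v))"
  unfolding psd_def qf_def by simp

lemma sum_add_split: "(\<Sum>i<a+(b::nat). f i) = (\<Sum>i<a. f i) + (\<Sum>j<b. f (a+j))"
  by (induct b) (simp_all add: add.assoc)

lemma sum4_swap: "(\<Sum>i\<in>A. \<Sum>j\<in>B. \<Sum>k\<in>C. \<Sum>l\<in>D. f i j k l) = (\<Sum>k\<in>C. \<Sum>l\<in>D. \<Sum>i\<in>A. \<Sum>j\<in>B. f i j k l)"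
proof -
  have "(\<Sum>i\<in>A. \<Sum>j\<in>B. \<Sum>k\<in>C. \<Sum>l\<in>D. f i j k l) = (\<Sum>i\<in>A. \<Sum>k\<in>C. \<Sum>j\<in>B. \<Sum>l\<in>D. f i j k l)"
    by (rule sum.cong[OF refl], rule sum.swap)
  also have "\<dots> = (\<Sum>i\<in>A. \<Sum>k\<in>C. \<Sum>l\<in>D. \<Sum>j\<in>B. f i j k l)"
    by (rule sum.cong[OF refl], rule sum.cong[OF refl], rule sum.swap)
  also have "\<dots> = (\<Sum>k\<in>C. \<Sum>i\<in>A. \<Sum>l\<in>D. \<Sum>j\<in>B. f i j k l)"
    by (rule sum.swap)
  also have "\<dots> = (\<Sum>k\<in>C. \<Sum>l\<in>D. \<Sum>i\<in>A. \<Sum>j\<in>B. f i j k l)"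
    by (rule sum.cong[OF refl], rule sum.swap)
  finally show ?thesis .
qed

lemma psd_congr:
  assumes Y: "psd m Y" and Z: "Z \<in> carrier_mat n n"
    and ent: "\<And>i j. i<n \<Longrightarrow> j<n \<Longrightarrow> Z$$(i,j) = (\<Sum>k<m. \<Sum>l<m. cnj (M k i) * Y$$(k,l) * M l j)"
  shows "psd n Z"
  unfolding psd_qf
proof (rule conjI[OF Z], rule ballI)
  fix v :: "complex vec" assume v: "v \<in> carrier_vec n"
  define w where "w = vec m (\<lambda>k. \<Sum>j<n. M k j * v $ j)"
  have w: "w \<in> carrier_vec m" unfolding w_def by simp
  have "qf n Z v = (\<Sum>i<n. \<Sum>j<n. cnj (v $ i) * (\<Sum>k<m. \<Sum>l<m. cnj (M k i) * Y$$(k,l) * M l j) * v $ j)"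
    unfolding qf_def using ent by simp
  also have "\<dots> = (\<Sum>i<n. \<Sum>j<n. \<Sum>k<m. \<Sum>l<m. cnj (v $ i) * cnj (M k i) * Y$$(k,l) * M l j * v $ j)"
    by (simp add: sum_distrib_left sum_distrib_right mult.assoc)
  also have "\<dots> = (\<Sum>k<m. \<Sum>l<m. \<Sum>i<n. \<Sum>j<n. cnj (v $ i) * cnj (M k i) * Y$$(k,l) * M l j * v $ j)"
    by (rule sum4_swap)
  also have "\<dots> = qf m Y w"
    unfolding qf_def w_def
    by (simp add: sum_distrib_left sum_distrib_right mult.assoc mult.commute mult.left_commute)
  finally have eq: "qf n Z v = qf m Y w" .
  show "qf n Z v \<in> \<real> \<and> 0 \<le> Re (qf n Z v)" unfolding eq using Y w unfolding psd_qf by blast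
qed

lemma psd_reindex:
  assumes Y: "psd m Y" and Z: "Z \<in> carrier_mat n n"
    and H: "\<And>I. I < n \<Longrightarrow> c I \<Longrightarrow> H I < m"
    and ent: "\<And>I J. I<n \<Longrightarrow> J<n \<Longrightarrow> Z$$(I,J) = (if c I \<and> c J then Y$$(H I, H J) else 0)"
  shows "psd n Z"
proof (rule psd_congr[OF Y Z, where M = "\<lambda>k i. if c i \<and> k = H i then 1 else 0"])
  fix i j assume ij: "i < n" "j < n"
  show "Z $$ (i, j) = (\<Sum>k<m. \<Sum>l<m. cnj (if c i \<and> k = H i then 1 else 0) * Y $$ (k, l) * (if c j \<and> l = H j then 1 else 0))"
  proof (cases "c i \<and> c j")
    case True
    have "(\<Sum>k<m. \<Sum>l<m. cnj (if c i \<and> k = H i then 1 else 0) * Y $$ (k, l) * (if c j \<and> l = H j then 1 else 0))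
      = (\<Sum>k<m. \<Sum>l<m. if k = H i then (if l = H j then Y $$ (k, l) else 0) else 0)"
      using True by (intro sum.cong refl) auto
    also have "\<dots> = (\<Sum>k<m. if k = H i then (\<Sum>l<m. if l = H j then Y $$ (k, l) else 0) else 0)"
      by (intro sum.cong refl) auto
    also have "\<dots> = Y $$ (H i, H j)" using H[OF ij(1)] H[OF ij(2)] True by simp
    finally show ?thesis using ent[OF ij] True by simp
  next
    case False
    have "(\<Sum>k<m. \<Sum>l<m. cnj (if c i \<and> k = H i then 1 else 0) * Y $$ (k, l) * (if c j \<and> l = H j then 1 else 0)) = 0"
      using False by (intro sum.neutral ballI) auto
    then show ?thesis using ent[OF ij] False by simp
  qed
qed

lemma psd_add: assumes "psd d A" "psd d B" shows "psd d (A + B)"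
proof -
  have A: "A \<in> carrier_mat d d" and B: "B \<in> carrier_mat d d" using assms psd_def by auto
  have q: "qf d (A+B) v = qf d A v + qf d B v" for v
    unfolding qf_def using A B by (simp add: algebra_simps sum.distrib)
  show ?thesis using assms unfolding psd_qf q using A B by auto
qed

lemma psd_smult: assumes "psd d A" "0 \<le> c" shows "psd d (complex_of_real c \<cdot>\<^sub>m A)"
proof -
  have A: "A \<in> carrier_mat d d" using assms psd_def by auto
  have q: "qf d (complex_of_real c \<cdot>\<^sub>m A) v = complex_of_real c * qf d A v" for v
    unfolding qf_def using A by (simp add: algebra_simps sum_distrib_left)
  have "qf d A v \<in> \<real> \<Longrightarrow> complex_of_real c * qf d A v \<in> \<real>" for v by simp
  then show ?thesis using assms unfolding psd_qf q using A by auto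
qed


lemma lt_mult_add: assumes "a < k" "b < (d::nat)" shows "a*d + b < k*d"
proof -
  have "a*d + b < (a+1)*d" using assms(2) by simp
  also have "\<dots> \<le> k*d" using assms(1) by (intro mult_le_mono1) simp
  finally show ?thesis .
qed

lemma div_lt: "i < k*(d::nat) \<Longrightarrow> i div d < k"
  by (simp add: less_mult_imp_div_less)

lemma mod_lt: "i < k*(d::nat) \<Longrightarrow> i mod d < d"
  by (cases "d = 0") auto

lemma dm_div[simp]: "b < (d::nat) \<Longrightarrow> (a*d+b) div d = a" by simp
lemma dm_mod[simp]: "b < (d::nat) \<Longrightarrow> (a*d+b) mod d = b" by simp

lemma lm_carrier[simp]: "lift_map k din dout Phi X \<in> carrier_mat (k*dout) (k*dout)"
  unfolding lift_map_def by simp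

lemma lm_dims[simp]: "dim_row (lift_map k din dout Phi X) = k*dout" "dim_col (lift_map k din dout Phi X) = k*dout"
  unfolding lift_map_def by simp_all

definition blkm :: "nat \<Rightarrow> nat \<Rightarrow> nat \<Rightarrow> nat \<Rightarrow> complex mat \<Rightarrow> complex mat" where
  "blkm din dout i j X = mat din din (\<lambda>(a,b). X $$ (i div dout * din + a, j div dout * din + b))"

lemma lm_index: "i < k*dout \<Longrightarrow> j < k*dout \<Longrightarrow>
   lift_map k din dout Phi X $$ (i,j) = Phi (blkm din dout i j X) $$ (i mod dout, j mod dout)"
  unfolding lift_map_def blkm_def by simp

definition mapsc :: "nat \<Rightarrow> nat \<Rightarrow> (complex mat \<Rightarrow> complex mat) \<Rightarrow> bool" where
  "mapsc din dout Phi \<longleftrightarrow> (\<forall>X \<in> carrier_mat din din. Phi X \<in> carrier_mat dout dout)"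

definition cp :: "nat \<Rightarrow> nat \<Rightarrow> (complex mat \<Rightarrow> complex mat) \<Rightarrow> bool" where
  "cp din dout Phi \<longleftrightarrow> (\<forall>k X. psd (k * din) X \<longrightarrow> psd (k * dout) (lift_map k din dout Phi X))"

lemma blkm_carrier[simp]: "blkm din dout i j X \<in> carrier_mat din din"
  unfolding blkm_def by simp

lemma lm_comp:
  assumes "mapsc din dmid Psi"
  shows "lift_map k din dout (\<lambda>X. Phi (Psi X)) X = lift_map k dmid dout Phi (lift_map k din dmid Psi X)"
proof (rule eq_matI)
  fix i j assume i: "i < dim_row (lift_map k dmid dout Phi (lift_map k din dmid Psi X))"
    and j: "j < dim_col (lift_map k dmid dout Phi (lift_map k din dmid Psi X))"
  then have i': "i < k*dout" and j': "j < k*dout" by simp_all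
  have "blkm dmid dout i j (lift_map k din dmid Psi X) = Psi (blkm din dout i j X)"
  proof (rule eq_matI)
    have C: "Psi (blkm din dout i j X) \<in> carrier_mat dmid dmid" using assms unfolding mapsc_def by simp
    then show "dim_row (blkm dmid dout i j (lift_map k din dmid Psi X)) = dim_row (Psi (blkm din dout i j X))"
      "dim_col (blkm dmid dout i j (lift_map k din dmid Psi X)) = dim_col (Psi (blkm din dout i j X))"
      unfolding blkm_def by simp_all
    fix a b assume a: "a < dim_row (Psi (blkm din dout i j X))" and b: "b < dim_col (Psi (blkm din dout i j X))"
    then have a': "a < dmid" and b': "b < dmid" using C by simp_all
    have ia: "i div dout * dmid + a < k * dmid" using lt_mult_add[OF div_lt[OF i'] a'] .
    have jb: "j div dout * dmid + b < k * dmid" using lt_mult_add[OF div_lt[OF j'] b'] .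
    have "blkm din dmid (i div dout * dmid + a) (j div dout * dmid + b) X = blkm din dout i j X"
      unfolding blkm_def using a' b' by simp
    note eq = this
    have "blkm dmid dout i j (lift_map k din dmid Psi X) $$ (a, b) = lift_map k din dmid Psi X $$ (i div dout * dmid + a, j div dout * dmid + b)"
      unfolding blkm_def using a' b' by simp
    also have "\<dots> = Psi (blkm din dmid (i div dout * dmid + a) (j div dout * dmid + b) X) $$ (a, b)"
      using ia jb a' b' by (simp add: lm_index)
    finally show "blkm dmid dout i j (lift_map k din dmid Psi X) $$ (a, b) = Psi (blkm din dout i j X) $$ (a, b)"
      using eq by simp
  qed
  then show "lift_map k din dout (\<lambda>X. Phi (Psi X)) X $$ (i, j) = lift_map k dmid dout Phi (lift_map k din dmid Psi X) $$ (i, j)"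
    using i' j' by (simp add: lm_index)
qed simp_all

lemma lm_add:
  assumes "mapsc din dout Phi1" "mapsc din dout Phi2"
  shows "lift_map k din dout (\<lambda>X. Phi1 X + Phi2 X) X = lift_map k din dout Phi1 X + lift_map k din dout Phi2 X"
proof (rule eq_matI)
  fix i j assume "i < dim_row (lift_map k din dout Phi1 X + lift_map k din dout Phi2 X)"
    "j < dim_col (lift_map k din dout Phi1 X + lift_map k din dout Phi2 X)"
  then have i: "i < k*dout" and j: "j < k*dout" by simp_all
  have C: "Phi2 (blkm din dout i j X) \<in> carrier_mat dout dout" using assms unfolding mapsc_def by simp
  show "lift_map k din dout (\<lambda>X. Phi1 X + Phi2 X) X $$ (i, j) = (lift_map k din dout Phi1 X + lift_map k din dout Phi2 X) $$ (i, j)"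
    using i j C mod_lt[OF i] mod_lt[OF j] by (simp add: lm_index)
qed simp_all

lemma lm_smult_id:
  assumes "X \<in> carrier_mat (k*d) (k*d)"
  shows "lift_map k d d (\<lambda>X. c \<cdot>\<^sub>m X) X = c \<cdot>\<^sub>m X"
proof (rule eq_matI)
  fix i j assume "i < dim_row (c \<cdot>\<^sub>m X)" "j < dim_col (c \<cdot>\<^sub>m X)"
  then have i: "i < k*d" and j: "j < k*d" using assms by simp_all
  show "lift_map k d d (\<lambda>X. c \<cdot>\<^sub>m X) X $$ (i, j) = (c \<cdot>\<^sub>m X) $$ (i, j)"
    using i j assms mod_lt[OF i] mod_lt[OF j] by (simp add: lm_index blkm_def)
qed (use assms in simp_all)

lemma lm_scale:
  assumes hom: "\<And>c X. X \<in> carrier_mat din din \<Longrightarrow> Phi (c \<cdot>\<^sub>m X) = c \<cdot>\<^sub>m Phi X"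
    and mc: "mapsc din dout Phi" and X: "X \<in> carrier_mat (k*din) (k*din)"
  shows "lift_map k din dout Phi (c \<cdot>\<^sub>m X) = c \<cdot>\<^sub>m lift_map k din dout Phi X"
proof (rule eq_matI)
  fix i j assume "i < dim_row (c \<cdot>\<^sub>m lift_map k din dout Phi X)" "j < dim_col (c \<cdot>\<^sub>m lift_map k din dout Phi X)"
  then have i: "i < k*dout" and j: "j < k*dout" by simp_all
  have "blkm din dout i j (c \<cdot>\<^sub>m X) = c \<cdot>\<^sub>m blkm din dout i j X"
    unfolding blkm_def using X lt_mult_add[OF div_lt[OF i]] lt_mult_add[OF div_lt[OF j]] by (auto intro!: eq_matI)
  moreover have "Phi (blkm din dout i j X) \<in> carrier_mat dout dout" using mc unfolding mapsc_def by simp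
  ultimately show "lift_map k din dout Phi (c \<cdot>\<^sub>m X) $$ (i, j) = (c \<cdot>\<^sub>m lift_map k din dout Phi X) $$ (i, j)"
    using i j mod_lt[OF i] mod_lt[OF j] hom by (simp add: lm_index)
qed simp_all

lemma cp_comp:
  assumes "mapsc din dmid Psi" "cp din dmid Psi" "cp dmid dout Phi"
  shows "cp din dout (\<lambda>X. Phi (Psi X))"
  using assms unfolding cp_def by (simp add: lm_comp)

lemma cp_add:
  assumes "mapsc din dout Phi1" "mapsc din dout Phi2" "cp din dout Phi1" "cp din dout Phi2"
  shows "cp din dout (\<lambda>X. Phi1 X + Phi2 X)"
  using assms unfolding cp_def by (simp add: lm_add psd_add)

lemma cp_smult:
  assumes "0 \<le> c" shows "cp d d (\<lambda>X. complex_of_real c \<cdot>\<^sub>m X)"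
  unfolding cp_def
proof (intro allI impI)
  fix k X assume "psd (k*d) X"
  moreover then have "X \<in> carrier_mat (k*d) (k*d)" unfolding psd_def by simp
  ultimately show "psd (k * d) (lift_map k d d (\<lambda>X. complex_of_real c \<cdot>\<^sub>m X) X)"
    using assms by (simp add: lm_smult_id psd_smult)
qed


definition emb0 :: "nat \<Rightarrow> nat \<Rightarrow> nat \<Rightarrow> complex mat \<Rightarrow> complex mat" where
  "emb0 m r s Y = mat (m*(r+s)) (m*(r+s)) (\<lambda>(I,J). if I mod (r+s) < r \<and> J mod (r+s) < r
     then Y $$ (I div (r+s) * r + I mod (r+s), J div (r+s) * r + J mod (r+s)) else 0)"

definition emb1 :: "nat \<Rightarrow> nat \<Rightarrow> nat \<Rightarrow> complex mat \<Rightarrow> complex mat" where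
  "emb1 m r s Y = mat (m*(r+s)) (m*(r+s)) (\<lambda>(I,J). if r \<le> I mod (r+s) \<and> r \<le> J mod (r+s)
     then Y $$ (I div (r+s) * s + (I mod (r+s) - r), J div (r+s) * s + (J mod (r+s) - r)) else 0)"

definition cmp0 :: "nat \<Rightarrow> nat \<Rightarrow> nat \<Rightarrow> complex mat \<Rightarrow> complex mat" where
  "cmp0 m r s X = mat (m*r) (m*r) (\<lambda>(i,j). X $$ (i div r * (r+s) + i mod r, j div r * (r+s) + j mod r))"

definition cmp1 :: "nat \<Rightarrow> nat \<Rightarrow> nat \<Rightarrow> complex mat \<Rightarrow> complex mat" where
  "cmp1 m r s X = mat (m* s) (m* s) (\<lambda>(i,j). X $$ (i div s * (r+s) + (r + i mod s), j div s * (r+s) + (r + j mod s)))"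

lemma emb0_carrier[simp]: "emb0 m r s Y \<in> carrier_mat (m*(r+s)) (m*(r+s))" unfolding emb0_def by simp
lemma emb1_carrier[simp]: "emb1 m r s Y \<in> carrier_mat (m*(r+s)) (m*(r+s))" unfolding emb1_def by simp
lemma cmp0_carrier[simp]: "cmp0 m r s X \<in> carrier_mat (m*r) (m*r)" unfolding cmp0_def by simp
lemma cmp1_carrier[simp]: "cmp1 m r s X \<in> carrier_mat (m* s) (m* s)" unfolding cmp1_def by simp
lemma emb_dims[simp]: "dim_row (emb0 m r s Y) = m*(r+s)" "dim_col (emb0 m r s Y) = m*(r+s)"
  "dim_row (emb1 m r s Y) = m*(r+s)" "dim_col (emb1 m r s Y) = m*(r+s)"
  "dim_row (cmp0 m r s X) = m*r" "dim_col (cmp0 m r s X) = m*r"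
  "dim_row (cmp1 m r s X) = m* s" "dim_col (cmp1 m r s X) = m* s"
  unfolding emb0_def emb1_def cmp0_def cmp1_def by simp_all

lemma b0: "I < m*(r+s) \<Longrightarrow> I mod (r+s) < r \<Longrightarrow> I div (r+s) * r + I mod (r+s) < m*(r+(0::nat))"
  using lt_mult_add[OF div_lt] by simp
lemma b1: "I < m*(r+s) \<Longrightarrow> r \<le> I mod (r+s) \<Longrightarrow> I div (r+s) * s + (I mod (r+s) - r) < m*(s::nat)"
  using lt_mult_add[OF div_lt, of I m "r+s" "I mod (r+s) - r" s] mod_lt[of I m "r+s"] by simp
lemma b1': "I < m*(r+s) \<Longrightarrow> r \<le> I mod (r+s) \<Longrightarrow> I div (r+s) * s + I mod (r+s) - r < m*(s::nat)"
  using b1 by fastforce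
lemma b2: "i < m*r \<Longrightarrow> i div r * (r+s) + i mod r < m*(r+(s::nat))"
  using lt_mult_add[OF div_lt, of i m r "i mod r" "r+s"] mod_lt[of i m r] by simp
lemma b3: "i < m* s \<Longrightarrow> i div s * (r+s) + (r + i mod s) < m*(r+(s::nat))"
  using lt_mult_add[OF div_lt, of i m s "r + i mod s" "r+s"] mod_lt[of i m s] by simp

lemma emb0_index: "I < m*(r+s) \<Longrightarrow> J < m*(r+s) \<Longrightarrow> emb0 m r s Y $$ (I,J) = (if I mod (r+s) < r \<and> J mod (r+s) < r
     then Y $$ (I div (r+s) * r + I mod (r+s), J div (r+s) * r + J mod (r+s)) else 0)"
  unfolding emb0_def by simp
lemma emb1_index: "I < m*(r+s) \<Longrightarrow> J < m*(r+s) \<Longrightarrow> emb1 m r s Y $$ (I,J) = (if r \<le> I mod (r+s) \<and> r \<le> J mod (r+s)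
     then Y $$ (I div (r+s) * s + (I mod (r+s) - r), J div (r+s) * s + (J mod (r+s) - r)) else 0)"
  unfolding emb1_def by simp
lemma cmp0_index: "i < m*r \<Longrightarrow> j < m*r \<Longrightarrow> cmp0 m r s X $$ (i,j) = X $$ (i div r * (r+s) + i mod r, j div r * (r+s) + j mod r)"
  unfolding cmp0_def by simp
lemma cmp1_index: "i < m* s \<Longrightarrow> j < m* s \<Longrightarrow> cmp1 m r s X $$ (i,j) = X $$ (i div s * (r+s) + (r + i mod s), j div s * (r+s) + (r + j mod s))"
  unfolding cmp1_def by simp

lemma emb0_add: "A \<in> carrier_mat (m*r) (m*r) \<Longrightarrow> B \<in> carrier_mat (m*r) (m*r) \<Longrightarrow> emb0 m r s (A + B) = emb0 m r s A + emb0 m r s B"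
  by (rule eq_matI) (auto simp: emb0_index b0[simplified])
lemma emb1_add: "A \<in> carrier_mat (m* s) (m* s) \<Longrightarrow> B \<in> carrier_mat (m* s) (m* s) \<Longrightarrow> emb1 m r s (A + B) = emb1 m r s A + emb1 m r s B"
  by (rule eq_matI) (auto simp: emb1_index b1 b1')
lemma emb0_smult: "A \<in> carrier_mat (m*r) (m*r) \<Longrightarrow> emb0 m r s (c \<cdot>\<^sub>m A) = c \<cdot>\<^sub>m emb0 m r s A"
  by (rule eq_matI) (auto simp: emb0_index b0[simplified])
lemma emb1_smult: "A \<in> carrier_mat (m* s) (m* s) \<Longrightarrow> emb1 m r s (c \<cdot>\<^sub>m A) = c \<cdot>\<^sub>m emb1 m r s A"
  by (rule eq_matI) (auto simp: emb1_index b1 b1')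
lemma cmp0_add: "A \<in> carrier_mat (m*(r+s)) (m*(r+s)) \<Longrightarrow> B \<in> carrier_mat (m*(r+s)) (m*(r+s)) \<Longrightarrow> cmp0 m r s (A + B) = cmp0 m r s A + cmp0 m r s B"
  by (rule eq_matI) (auto simp: cmp0_index b2)
lemma cmp1_add: "A \<in> carrier_mat (m*(r+s)) (m*(r+s)) \<Longrightarrow> B \<in> carrier_mat (m*(r+s)) (m*(r+s)) \<Longrightarrow> cmp1 m r s (A + B) = cmp1 m r s A + cmp1 m r s B"
  by (rule eq_matI) (auto simp: cmp1_index b3)
lemma cmp0_smult: "A \<in> carrier_mat (m*(r+s)) (m*(r+s)) \<Longrightarrow> cmp0 m r s (c \<cdot>\<^sub>m A) = c \<cdot>\<^sub>m cmp0 m r s A"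
  by (rule eq_matI) (auto simp: cmp0_index b2)
lemma cmp1_smult: "A \<in> carrier_mat (m*(r+s)) (m*(r+s)) \<Longrightarrow> cmp1 m r s (c \<cdot>\<^sub>m A) = c \<cdot>\<^sub>m cmp1 m r s A"
  by (rule eq_matI) (auto simp: cmp1_index b3)


lemma blkm_index: "a < din \<Longrightarrow> b < din \<Longrightarrow> blkm din dout i j X $$ (a,b) = X $$ (i div dout * din + a, j div dout * din + b)"
  unfolding blkm_def by simp

lemma cp_cmp0: "cp (m*(r+s)) (m*r) (cmp0 m r s)"
  unfolding cp_def
proof (intro allI impI)
  fix k X assume X: "psd (k * (m * (r + s))) X"
  let ?H = "\<lambda>i. i div (m*r) * (m*(r+s)) + ((i mod (m*r)) div r * (r+s) + (i mod (m*r)) mod r)"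
  show "psd (k * (m * r)) (lift_map k (m * (r + s)) (m * r) (cmp0 m r s) X)"
  proof (rule psd_reindex[OF X lm_carrier, where c = "\<lambda>_. True" and H = ?H])
    fix I assume I: "I < k * (m * r)"
    show "?H I < k * (m * (r + s))" using lt_mult_add[OF div_lt[OF I] b2[OF mod_lt[OF I]]] .
  next
    fix I J assume I: "I < k * (m * r)" and J: "J < k * (m * r)"
    show "lift_map k (m * (r + s)) (m * r) (cmp0 m r s) X $$ (I, J) = (if True \<and> True then X $$ (?H I, ?H J) else 0)"
      using I J mod_lt[OF I] mod_lt[OF J] b2[OF mod_lt[OF I]] b2[OF mod_lt[OF J]]
      by (simp add: lm_index cmp0_index blkm_index)
  qed
qed

lemma cp_cmp1: "cp (m*(r+s)) (m * s) (cmp1 m r s)"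
  unfolding cp_def
proof (intro allI impI)
  fix k X assume X: "psd (k * (m * (r + s))) X"
  let ?H = "\<lambda>i. i div (m * s) * (m*(r+s)) + ((i mod (m * s)) div s * (r+s) + (r + (i mod (m * s)) mod s))"
  show "psd (k * (m * s)) (lift_map k (m * (r + s)) (m * s) (cmp1 m r s) X)"
  proof (rule psd_reindex[OF X lm_carrier, where c = "\<lambda>_. True" and H = ?H])
    fix I assume I: "I < k * (m * s)"
    show "?H I < k * (m * (r + s))" using lt_mult_add[OF div_lt[OF I] b3[OF mod_lt[OF I]]] .
  next
    fix I J assume I: "I < k * (m * s)" and J: "J < k * (m * s)"
    show "lift_map k (m * (r + s)) (m * s) (cmp1 m r s) X $$ (I, J) = (if True \<and> True then X $$ (?H I, ?H J) else 0)"
      using I J mod_lt[OF I] mod_lt[OF J] b3[OF mod_lt[OF I]] b3[OF mod_lt[OF J]]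
      by (simp add: lm_index cmp1_index blkm_index)
  qed
qed

lemma cp_emb0: "cp (m*r) (m*(r+s)) (emb0 m r s)"
  unfolding cp_def
proof (intro allI impI)
  fix k Y assume Y: "psd (k * (m * r)) Y"
  let ?c = "\<lambda>I. (I mod (m*(r+s))) mod (r+s) < r"
  let ?H = "\<lambda>I. I div (m*(r+s)) * (m*r) + ((I mod (m*(r+s))) div (r+s) * r + (I mod (m*(r+s))) mod (r+s))"
  show "psd (k * (m * (r + s))) (lift_map k (m * r) (m * (r + s)) (emb0 m r s) Y)"
  proof (rule psd_reindex[OF Y lm_carrier, where c = ?c and H = ?H])
    fix I assume I: "I < k * (m * (r+s))" and c: "?c I"
    show "?H I < k * (m * r)" using lt_mult_add[OF div_lt[OF I] b0[OF mod_lt[OF I] c, simplified]] .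
  next
    fix I J assume I: "I < k * (m * (r+s))" and J: "J < k * (m * (r+s))"
    show "lift_map k (m * r) (m * (r + s)) (emb0 m r s) Y $$ (I, J) = (if ?c I \<and> ?c J then Y $$ (?H I, ?H J) else 0)"
      using I J mod_lt[OF I] mod_lt[OF J] b0[OF mod_lt[OF I], simplified] b0[OF mod_lt[OF J], simplified]
      by (simp add: lm_index emb0_index blkm_index)
  qed
qed

lemma cp_emb1: "cp (m * s) (m*(r+s)) (emb1 m r s)"
  unfolding cp_def
proof (intro allI impI)
  fix k Y assume Y: "psd (k * (m * s)) Y"
  let ?c = "\<lambda>I. r \<le> (I mod (m*(r+s))) mod (r+s)"
  let ?H = "\<lambda>I. I div (m*(r+s)) * (m * s) + ((I mod (m*(r+s))) div (r+s) * s + ((I mod (m*(r+s))) mod (r+s) - r))"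
  show "psd (k * (m * (r + s))) (lift_map k (m * s) (m * (r + s)) (emb1 m r s) Y)"
  proof (rule psd_reindex[OF Y lm_carrier, where c = ?c and H = ?H])
    fix I assume I: "I < k * (m * (r+s))" and c: "?c I"
    show "?H I < k * (m * s)" using lt_mult_add[OF div_lt[OF I] b1[OF mod_lt[OF I] c]] .
  next
    fix I J assume I: "I < k * (m * (r+s))" and J: "J < k * (m * (r+s))"
    show "lift_map k (m * s) (m * (r + s)) (emb1 m r s) Y $$ (I, J) = (if ?c I \<and> ?c J then Y $$ (?H I, ?H J) else 0)"
      using I J mod_lt[OF I] mod_lt[OF J] b1[OF mod_lt[OF I]] b1[OF mod_lt[OF J]]
      by (simp add: lm_index emb1_index blkm_index)
  qed
qed

lemma mtrace_emb0: assumes "Y \<in> carrier_mat (m*r) (m*r)" shows "mtrace (emb0 m r s Y) = mtrace Y"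
proof -
  have "mtrace (emb0 m r s Y) = (\<Sum>I<m*(r+s). if I mod (r+s) < r then Y $$ (I div (r+s) * r + I mod (r+s), I div (r+s) * r + I mod (r+s)) else 0)"
    unfolding mtrace_def by (simp add: emb0_index)
  also have "\<dots> = (\<Sum>e<m. \<Sum>b<r+s. if b < r then Y $$ (e * r + b, e * r + b) else 0)"
    unfolding sum_mult_product by (intro sum.cong refl) (simp add: add.commute)
  also have "\<dots> = (\<Sum>e<m. \<Sum>b<r. Y $$ (b + e * r, b + e * r))"
    unfolding sum_add_split by (simp add: add.commute)
  also have "\<dots> = mtrace Y" using assms by (simp add: mtrace_def sum_mult_product)
  finally show ?thesis .
qed

lemma mtrace_emb1: assumes "Y \<in> carrier_mat (m * s) (m * s)" shows "mtrace (emb1 m r s Y) = mtrace Y"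
proof -
  have "mtrace (emb1 m r s Y) = (\<Sum>I<m*(r+s). if r \<le> I mod (r+s) then Y $$ (I div (r+s) * s + (I mod (r+s) - r), I div (r+s) * s + (I mod (r+s) - r)) else 0)"
    unfolding mtrace_def by (simp add: emb1_index)
  also have "\<dots> = (\<Sum>e<m. \<Sum>b<r+s. if r \<le> b then Y $$ (e * s + (b - r), e * s + (b - r)) else 0)"
    unfolding sum_mult_product by (intro sum.cong refl) (simp add: add.commute)
  also have "\<dots> = (\<Sum>e<m. \<Sum>b<s. Y $$ (b + e * s, b + e * s))"
    unfolding sum_add_split by (simp add: add.commute)
  also have "\<dots> = mtrace Y" using assms by (simp add: mtrace_def sum_mult_product)
  finally show ?thesis .
qed

lemma mtrace_cmp: assumes "X \<in> carrier_mat (m*(r+s)) (m*(r+s))"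
  shows "mtrace (cmp0 m r s X) + mtrace (cmp1 m r s X) = mtrace X"
proof -
  have "mtrace (cmp0 m r s X) = (\<Sum>e<m. \<Sum>b<r. X $$ (e*(r+s) + b, e*(r+s) + b))"
    by (simp add: mtrace_def sum_mult_product cmp0_index add.commute)
  moreover have "mtrace (cmp1 m r s X) = (\<Sum>e<m. \<Sum>b<s. X $$ (e*(r+s) + (r + b), e*(r+s) + (r+b)))"
    by (simp add: mtrace_def sum_mult_product cmp1_index add.commute)
  moreover have "mtrace X = (\<Sum>e<m. \<Sum>b<r+s. X $$ (e*(r+s) + b, e*(r+s) + b))"
    using assms by (simp add: mtrace_def sum_mult_product add.commute)
  ultimately show ?thesis unfolding sum_add_split sum.distrib by simp
qed


lemma mult_index': "A \<in> carrier_mat n m \<Longrightarrow> B \<in> carrier_mat m k \<Longrightarrow> i < n \<Longrightarrow> j < k \<Longrightarrow> (A * B) $$ (i,j) = (\<Sum>l<m. A $$ (i,l) * B $$ (l,j))"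
  by (simp add: scalar_prod_def atLeast0LessThan)

lemma kron_dims[simp]: "dim_row (kron A B) = dim_row A * dim_row B" "dim_col (kron A B) = dim_col A * dim_col B"
  unfolding kron_def by simp_all

lemma kron_index: "i < dim_row A * dim_row B \<Longrightarrow> j < dim_col A * dim_col B \<Longrightarrow>
  kron A B $$ (i,j) = A $$ (i div dim_row B, j div dim_col B) * B $$ (i mod dim_row B, j mod dim_col B)"
  unfolding kron_def by simp

definition KK :: "nat \<Rightarrow> complex mat \<Rightarrow> nat \<Rightarrow> complex mat" where
  "KK p W q = kron (kron (1\<^sub>m p) W) (1\<^sub>m q)"

lemma KK_carrier: "W \<in> carrier_mat dO dI \<Longrightarrow> KK p W q \<in> carrier_mat (p*dO*q) (p*dI*q)"
  unfolding KK_def carrier_mat_def by simp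

lemma dagger_carrier: "A \<in> carrier_mat a b \<Longrightarrow> dagger A \<in> carrier_mat b a"
  unfolding dagger_def by simp

lemma dagger_index: "A \<in> carrier_mat a b \<Longrightarrow> i < b \<Longrightarrow> j < a \<Longrightarrow> dagger A $$ (i,j) = cnj (A $$ (j,i))"
  unfolding dagger_def by simp

lemma KK_index: assumes W: "W \<in> carrier_mat dO dI" and I: "I < p*dO*q" and a: "a < p*dI*q"
  shows "KK p W q $$ (I,a) = (if I div q div dO = a div q div dI then 1 else 0) * W $$ (I div q mod dO, a div q mod dI)
     * (if I mod q = a mod q then 1 else 0)"
proof -
  have I1: "I div q < p*dO" using div_lt[of I "p*dO" q] I by simp
  have a1: "a div q < p*dI" using div_lt[of a "p*dI" q] a by simp
  have "I div q div dO < p" using div_lt[OF I1] .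
  moreover have "a div q div dI < p" using div_lt[OF a1] .
  moreover have "I mod q < q" "a mod q < q" using mod_lt[of I "p*dO" q] mod_lt[of a "p*dI" q] I a by auto
  ultimately show ?thesis unfolding KK_def using W I a I1 a1 by (simp add: kron_index)
qed

lemma KK_row_sum:
  assumes W: "W \<in> carrier_mat dO dI" and I: "I < p*dO*q"
  shows "(\<Sum>a<p*dI*q. KK p W q $$ (I,a) * f a) = (\<Sum>x<dI. W $$ (I div q mod dO, x) * f (I mod q + (x + I div q div dO * dI) * q))"
proof -
  have I1: "I div q < p*dO" using div_lt[of I "p*dO" q] I by simp
  have o0: "I div q div dO < p" using div_lt[OF I1] .
  have l: "I mod q < q" using mod_lt[of I "p*dO" q] I by simp
  have "(\<Sum>a<p*dI*q. KK p W q $$ (I,a) * f a) = (\<Sum>u<p*dI. \<Sum>l<q. KK p W q $$ (I, l + u*q) * f (l + u*q))"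
    by (simp add: sum_mult_product)
  also have "\<dots> = (\<Sum>u<p*dI. \<Sum>l<q. if l = I mod q then (if I div q div dO = u div dI then 1 else 0) * W $$ (I div q mod dO, u mod dI) * f (l + u*q) else 0)"
  proof (intro sum.cong refl)
    fix u l assume u: "u \<in> {..<p*dI}" and l: "l \<in> {..<q}"
    have "l + u*q < p*dI*q" using lt_mult_add[of u "p*dI" l q] u l by (simp add: add.commute)
    then show "KK p W q $$ (I, l + u*q) * f (l + u*q) = (if l = I mod q then (if I div q div dO = u div dI then 1 else 0) * W $$ (I div q mod dO, u mod dI) * f (l + u*q) else 0)"
      using l by (simp add: KK_index[OF W I])
  qed
  also have "\<dots> = (\<Sum>u<p*dI. (if I div q div dO = u div dI then 1 else 0) * W $$ (I div q mod dO, u mod dI) * f (I mod q + u*q))"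
    using l by simp
  also have "\<dots> = (\<Sum>u0<p. \<Sum>x<dI. (if I div q div dO = u0 then 1 else 0) * W $$ (I div q mod dO, x) * f (I mod q + (x + u0*dI)*q))"
    by (simp add: sum_mult_product)
  also have "\<dots> = (\<Sum>u0<p. if u0 = I div q div dO then (\<Sum>x<dI. W $$ (I div q mod dO, x) * f (I mod q + (x + u0*dI)*q)) else 0)"
    by (intro sum.cong refl) auto
  also have "\<dots> = (\<Sum>x<dI. W $$ (I div q mod dO, x) * f (I mod q + (x + I div q div dO * dI) * q))"
    using o0 by simp
  finally show ?thesis .
qed

lemma conj_entry:
  assumes W: "W \<in> carrier_mat dO dI" and Y: "Y \<in> carrier_mat (p*dI*q) (p*dI*q)"
    and I: "I < p*dO*q" and J: "J < p*dO*q"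
  shows "(KK p W q * Y * dagger (KK p W q)) $$ (I,J) =
    (\<Sum>y<dI. cnj (W $$ (J div q mod dO, y)) * (\<Sum>x<dI. W $$ (I div q mod dO, x) *
        Y $$ (I mod q + (x + I div q div dO * dI) * q, J mod q + (y + J div q div dO * dI) * q)))"
proof -
  have K: "KK p W q \<in> carrier_mat (p*dO*q) (p*dI*q)" using KK_carrier[OF W] .
  have dK: "dagger (KK p W q) \<in> carrier_mat (p*dI*q) (p*dO*q)" using dagger_carrier[OF K] .
  have KY: "KK p W q * Y \<in> carrier_mat (p*dO*q) (p*dI*q)" using K Y by simp
  define g where "g b = (\<Sum>x<dI. W $$ (I div q mod dO, x) * Y $$ (I mod q + (x + I div q div dO * dI) * q, b))" for b
  have "(KK p W q * Y * dagger (KK p W q)) $$ (I,J) = (\<Sum>b<p*dI*q. (KK p W q * Y) $$ (I,b) * dagger (KK p W q) $$ (b,J))"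
    using mult_index'[OF KY dK I J] .
  also have "\<dots> = (\<Sum>b<p*dI*q. cnj (KK p W q $$ (J,b)) * g b)"
  proof (intro sum.cong refl)
    fix b assume b: "b \<in> {..<p*dI*q}"
    have "(KK p W q * Y) $$ (I,b) = (\<Sum>a<p*dI*q. KK p W q $$ (I,a) * Y $$ (a,b))"
      using mult_index'[OF K Y I] b by simp
    also have "\<dots> = g b" unfolding g_def by (rule KK_row_sum[OF W I])
    finally show "(KK p W q * Y) $$ (I,b) * dagger (KK p W q) $$ (b,J) = cnj (KK p W q $$ (J,b)) * g b"
      using dagger_index[OF K] b J by simp
  qed
  also have "\<dots> = cnj (\<Sum>b<p*dI*q. KK p W q $$ (J,b) * cnj (g b))"
    by simp
  also have "\<dots> = cnj (\<Sum>y<dI. W $$ (J div q mod dO, y) * cnj (g (J mod q + (y + J div q div dO * dI) * q)))"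
    using KK_row_sum[OF W J, of "\<lambda>b. cnj (g b)"] by simp
  also have "\<dots> = (\<Sum>y<dI. cnj (W $$ (J div q mod dO, y)) * g (J mod q + (y + J div q div dO * dI) * q))"
    by simp
  finally show ?thesis unfolding g_def .
qed


lemma zb: "u < p \<Longrightarrow> x < dI \<Longrightarrow> l < N \<Longrightarrow> l + (x + u*dI)*N < p*dI*(N::nat)"
  using lt_mult_add[of "x + u*dI" "p*dI" l N] lt_mult_add[of u p x dI] by (simp add: add.commute)

lemma conj_emb0:
  assumes W: "W \<in> carrier_mat dO dI" and Y: "Y \<in> carrier_mat (p*dI*r) (p*dI*r)"
  shows "KK p W (r+s) * emb0 (p*dI) r s Y * dagger (KK p W (r+s)) = emb0 (p*dO) r s (KK p W r * Y * dagger (KK p W r))"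
proof (rule eq_matI)
  have K: "KK p W (r+s) \<in> carrier_mat (p*dO*(r+s)) (p*dI*(r+s))" using KK_carrier[OF W] .
  then show "dim_row (KK p W (r+s) * emb0 (p*dI) r s Y * dagger (KK p W (r+s))) = dim_row (emb0 (p*dO) r s (KK p W r * Y * dagger (KK p W r)))"
    "dim_col (KK p W (r+s) * emb0 (p*dI) r s Y * dagger (KK p W (r+s))) = dim_col (emb0 (p*dO) r s (KK p W r * Y * dagger (KK p W r)))"
    using dagger_carrier[OF K] by auto
  fix I J assume "I < dim_row (emb0 (p*dO) r s (KK p W r * Y * dagger (KK p W r)))" "J < dim_col (emb0 (p*dO) r s (KK p W r * Y * dagger (KK p W r)))"
  then have I: "I < p*dO*(r+s)" and J: "J < p*dO*(r+s)" by simp_all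
  let ?N = "r+s"
  have oI: "I div ?N div dO < p" using div_lt[OF div_lt[of I "p*dO" ?N]] I by simp
  have oJ: "J div ?N div dO < p" using div_lt[OF div_lt[of J "p*dO" ?N]] J by simp
  have lI: "I mod ?N < ?N" and lJ: "J mod ?N < ?N" using mod_lt[of I "p*dO" ?N] mod_lt[of J "p*dO" ?N] I J by auto
  let ?c = "I mod ?N < r \<and> J mod ?N < r"
  have "(KK p W (r+s) * emb0 (p*dI) r s Y * dagger (KK p W (r+s))) $$ (I,J) =
    (\<Sum>y<dI. cnj (W $$ (J div ?N mod dO, y)) * (\<Sum>x<dI. W $$ (I div ?N mod dO, x) *
        emb0 (p*dI) r s Y $$ (I mod ?N + (x + I div ?N div dO * dI) * ?N, J mod ?N + (y + J div ?N div dO * dI) * ?N)))"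
    using conj_entry[OF W _ I J] by simp
  also have "\<dots> = (\<Sum>y<dI. cnj (W $$ (J div ?N mod dO, y)) * (\<Sum>x<dI. W $$ (I div ?N mod dO, x) *
        (if ?c then Y $$ (I mod ?N + (x + I div ?N div dO * dI) * r, J mod ?N + (y + J div ?N div dO * dI) * r) else 0)))"
  proof (intro sum.cong refl arg_cong2[where f = "(*)"])
    fix x y assume x: "x \<in> {..<dI}" and y: "y \<in> {..<dI}"
    have zI: "I mod ?N + (x + I div ?N div dO * dI) * ?N < p*dI*?N" using zb[OF oI _ lI] x by simp
    have zJ: "J mod ?N + (y + J div ?N div dO * dI) * ?N < p*dI*?N" using zb[OF oJ _ lJ] y by simp
    show "emb0 (p*dI) r s Y $$ (I mod ?N + (x + I div ?N div dO * dI) * ?N, J mod ?N + (y + J div ?N div dO * dI) * ?N)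
      = (if ?c then Y $$ (I mod ?N + (x + I div ?N div dO * dI) * r, J mod ?N + (y + J div ?N div dO * dI) * r) else 0)"
      using zI zJ lI lJ by (simp add: emb0_index add.commute)
  qed
  also have "\<dots> = emb0 (p*dO) r s (KK p W r * Y * dagger (KK p W r)) $$ (I,J)"
  proof (cases ?c)
    case True
    have I': "I div ?N * r + I mod ?N < p*dO*r" using b0[of I "p*dO" r s] I True by simp
    have J': "J div ?N * r + J mod ?N < p*dO*r" using b0[of J "p*dO" r s] J True by simp
    have "emb0 (p*dO) r s (KK p W r * Y * dagger (KK p W r)) $$ (I,J) = (KK p W r * Y * dagger (KK p W r)) $$ (I div ?N * r + I mod ?N, J div ?N * r + J mod ?N)"
      using True I J by (simp add: emb0_index)
    also have "\<dots> = (\<Sum>y<dI. cnj (W $$ (J div ?N mod dO, y)) * (\<Sum>x<dI. W $$ (I div ?N mod dO, x) *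
        Y $$ (I mod ?N + (x + I div ?N div dO * dI) * r, J mod ?N + (y + J div ?N div dO * dI) * r)))"
      unfolding conj_entry[OF W Y I' J'] using True by simp
    finally show ?thesis using True by simp
  next
    case False
    have "emb0 (p*dO) r s (KK p W r * Y * dagger (KK p W r)) $$ (I,J) = 0"
      using I J False by (auto simp: emb0_index)
    then show ?thesis by (simp only: if_not_P[OF False]) simp
  qed
  finally show "(KK p W (r+s) * emb0 (p*dI) r s Y * dagger (KK p W (r+s))) $$ (I,J) = emb0 (p*dO) r s (KK p W r * Y * dagger (KK p W r)) $$ (I,J)" .
qed


lemma conj_emb1:
  assumes W: "W \<in> carrier_mat dO dI" and Y: "Y \<in> carrier_mat (p*dI* s) (p*dI* s)"
  shows "KK p W (r+s) * emb1 (p*dI) r s Y * dagger (KK p W (r+s)) = emb1 (p*dO) r s (KK p W s * Y * dagger (KK p W s))"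
proof (rule eq_matI)
  have K: "KK p W (r+s) \<in> carrier_mat (p*dO*(r+s)) (p*dI*(r+s))" using KK_carrier[OF W] .
  then show "dim_row (KK p W (r+s) * emb1 (p*dI) r s Y * dagger (KK p W (r+s))) = dim_row (emb1 (p*dO) r s (KK p W s * Y * dagger (KK p W s)))"
    "dim_col (KK p W (r+s) * emb1 (p*dI) r s Y * dagger (KK p W (r+s))) = dim_col (emb1 (p*dO) r s (KK p W s * Y * dagger (KK p W s)))"
    using dagger_carrier[OF K] by auto
  fix I J assume "I < dim_row (emb1 (p*dO) r s (KK p W s * Y * dagger (KK p W s)))" "J < dim_col (emb1 (p*dO) r s (KK p W s * Y * dagger (KK p W s)))"
  then have I: "I < p*dO*(r+s)" and J: "J < p*dO*(r+s)" by simp_all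
  let ?N = "r+s"
  have oI: "I div ?N div dO < p" using div_lt[OF div_lt[of I "p*dO" ?N]] I by simp
  have oJ: "J div ?N div dO < p" using div_lt[OF div_lt[of J "p*dO" ?N]] J by simp
  have lI: "I mod ?N < ?N" and lJ: "J mod ?N < ?N" using mod_lt[of I "p*dO" ?N] mod_lt[of J "p*dO" ?N] I J by auto
  let ?c = "r \<le> I mod ?N \<and> r \<le> J mod ?N"
  have "(KK p W (r+s) * emb1 (p*dI) r s Y * dagger (KK p W (r+s))) $$ (I,J) =
    (\<Sum>y<dI. cnj (W $$ (J div ?N mod dO, y)) * (\<Sum>x<dI. W $$ (I div ?N mod dO, x) *
        emb1 (p*dI) r s Y $$ (I mod ?N + (x + I div ?N div dO * dI) * ?N, J mod ?N + (y + J div ?N div dO * dI) * ?N)))"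
    using conj_entry[OF W _ I J] by simp
  also have "\<dots> = (\<Sum>y<dI. cnj (W $$ (J div ?N mod dO, y)) * (\<Sum>x<dI. W $$ (I div ?N mod dO, x) *
        (if ?c then Y $$ ((I mod ?N - r) + (x + I div ?N div dO * dI) * s, (J mod ?N - r) + (y + J div ?N div dO * dI) * s) else 0)))"
  proof (intro sum.cong refl arg_cong2[where f = "(*)"])
    fix x y assume x: "x \<in> {..<dI}" and y: "y \<in> {..<dI}"
    have zI: "I mod ?N + (x + I div ?N div dO * dI) * ?N < p*dI*?N" using zb[OF oI _ lI] x by simp
    have zJ: "J mod ?N + (y + J div ?N div dO * dI) * ?N < p*dI*?N" using zb[OF oJ _ lJ] y by simp
    show "emb1 (p*dI) r s Y $$ (I mod ?N + (x + I div ?N div dO * dI) * ?N, J mod ?N + (y + J div ?N div dO * dI) * ?N)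
      = (if ?c then Y $$ ((I mod ?N - r) + (x + I div ?N div dO * dI) * s, (J mod ?N - r) + (y + J div ?N div dO * dI) * s) else 0)"
      using zI zJ lI lJ by (simp add: emb1_index add.commute)
  qed
  also have "\<dots> = emb1 (p*dO) r s (KK p W s * Y * dagger (KK p W s)) $$ (I,J)"
  proof (cases ?c)
    case True
    have I': "I div ?N * s + (I mod ?N - r) < p*dO* s" using b1[of I "p*dO" r s] I True by simp
    have J': "J div ?N * s + (J mod ?N - r) < p*dO* s" using b1[of J "p*dO" r s] J True by simp
    have lI': "I mod ?N - r < s" and lJ': "J mod ?N - r < s" using lI lJ True by arith+
    have "emb1 (p*dO) r s (KK p W s * Y * dagger (KK p W s)) $$ (I,J) = (KK p W s * Y * dagger (KK p W s)) $$ (I div ?N * s + (I mod ?N - r), J div ?N * s + (J mod ?N - r))"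
      using True I J by (auto simp: emb1_index)
    also have "\<dots> = (\<Sum>y<dI. cnj (W $$ (J div ?N mod dO, y)) * (\<Sum>x<dI. W $$ (I div ?N mod dO, x) *
        Y $$ ((I mod ?N - r) + (x + I div ?N div dO * dI) * s, (J mod ?N - r) + (y + J div ?N div dO * dI) * s)))"
      unfolding conj_entry[OF W Y I' J'] using lI' lJ' by (simp only: dm_div dm_mod)
    finally show ?thesis using True by simp
  next
    case False
    have "emb1 (p*dO) r s (KK p W s * Y * dagger (KK p W s)) $$ (I,J) = 0"
      using I J False by (auto simp: emb1_index)
    then show ?thesis by (simp only: if_not_P[OF False]) simp
  qed
  finally show "(KK p W (r+s) * emb1 (p*dI) r s Y * dagger (KK p W (r+s))) $$ (I,J) = emb1 (p*dO) r s (KK p W s * Y * dagger (KK p W s)) $$ (I,J)" .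
qed


lemma modN: "I mod (m*N) mod N = I mod (N::nat)"
  by (simp add: mod_mod_cancel)

lemma divN: "I div (N::nat) = I div (m*N) * m + I mod (m*N) div N"
proof -
  have "I mod (N*m) = N * (I div N mod m) + I mod N" by (rule mod_mult2_eq)
  moreover have "I div (N*m) = I div N div m" by (rule div_mult2_eq)
  ultimately show ?thesis
    by (cases "N = 0") (simp_all add: mult.commute div_mult_mod_eq)
qed

lemma lm_emb0:
  assumes L: "L \<in> carrier_mat (p*(m*r)) (p*(m*r))"
  shows "lift_map p (m*r) (m*(r+s)) (emb0 m r s) L = emb0 (p*m) r s L"
proof (rule eq_matI)
  fix I J assume "I < dim_row (emb0 (p*m) r s L)" "J < dim_col (emb0 (p*m) r s L)"
  then have I: "I < p*(m*(r+s))" and J: "J < p*(m*(r+s))" by (simp_all add: mult.assoc)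
  let ?N = "r+s"
  have e: "I div (m*?N) * (m*r) + (I mod (m*?N) div ?N * r + I mod ?N) = I div ?N * r + I mod ?N" for I
    by (subst divN[of I ?N m]) (simp add: algebra_simps)
  have x: "I mod (m*?N) < m*?N" "J mod (m*?N) < m*?N" using mod_lt[OF I] mod_lt[OF J] by auto
  have bI: "I mod (m*?N) mod ?N < r \<Longrightarrow> I mod (m*?N) div ?N * r + I mod (m*?N) mod ?N < m*r" using b0[OF x(1)] by simp
  have bJ: "J mod (m*?N) mod ?N < r \<Longrightarrow> J mod (m*?N) div ?N * r + J mod (m*?N) mod ?N < m*r" using b0[OF x(2)] by simp
  have "lift_map p (m*r) (m*?N) (emb0 m r s) L $$ (I,J) = (if I mod ?N < r \<and> J mod ?N < r then L $$ (I div ?N * r + I mod ?N, J div ?N * r + J mod ?N) else 0)"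
    using I J x bI bJ by (simp add: lm_index emb0_index blkm_index e modN)
  also have "\<dots> = emb0 (p*m) r s L $$ (I,J)" using I J by (simp add: emb0_index mult.assoc)
  finally show "lift_map p (m*r) (m*(r+s)) (emb0 m r s) L $$ (I,J) = emb0 (p*m) r s L $$ (I,J)" .
qed (simp_all add: mult.assoc)

lemma lm_emb1:
  assumes L: "L \<in> carrier_mat (p*(m * s)) (p*(m * s))"
  shows "lift_map p (m * s) (m*(r+s)) (emb1 m r s) L = emb1 (p*m) r s L"
proof (rule eq_matI)
  fix I J assume "I < dim_row (emb1 (p*m) r s L)" "J < dim_col (emb1 (p*m) r s L)"
  then have I: "I < p*(m*(r+s))" and J: "J < p*(m*(r+s))" by (simp_all add: mult.assoc)
  let ?N = "r+s"
  have e: "I div (m*?N) * (m * s) + (I mod (m*?N) div ?N * s + (I mod ?N - r)) = I div ?N * s + (I mod ?N - r)" for I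
    by (subst divN[of I ?N m]) (simp add: algebra_simps)
  have x: "I mod (m*?N) < m*?N" "J mod (m*?N) < m*?N" using mod_lt[OF I] mod_lt[OF J] by auto
  have bI: "r \<le> I mod (m*?N) mod ?N \<Longrightarrow> I mod (m*?N) div ?N * s + (I mod (m*?N) mod ?N - r) < m * s" using b1[OF x(1)] by simp
  have bJ: "r \<le> J mod (m*?N) mod ?N \<Longrightarrow> J mod (m*?N) div ?N * s + (J mod (m*?N) mod ?N - r) < m * s" using b1[OF x(2)] by simp
  have "lift_map p (m * s) (m*?N) (emb1 m r s) L $$ (I,J) = (if r \<le> I mod ?N \<and> r \<le> J mod ?N then L $$ (I div ?N * s + (I mod ?N - r), J div ?N * s + (J mod ?N - r)) else 0)"
    using I J x bI bJ by (simp add: lm_index emb1_index blkm_index e modN del: add_diff_assoc)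
  also have "\<dots> = emb1 (p*m) r s L $$ (I,J)" using I J by (simp add: emb1_index mult.assoc del: add_diff_assoc)
  finally show "lift_map p (m * s) (m*(r+s)) (emb1 m r s) L $$ (I,J) = emb1 (p*m) r s L $$ (I,J)" .
qed (simp_all add: mult.assoc)

lemma emb0_at0: "v < r \<Longrightarrow> v' < r \<Longrightarrow> a*(r+s) + v < m*(r+s) \<Longrightarrow> a'*(r+s) + v' < m*(r+s) \<Longrightarrow>
  emb0 m r s A $$ (a*(r+s) + v, a'*(r+s) + v') = A $$ (a*r+v, a'*r+v')"
  by (simp add: emb0_index)
lemma emb1_at0: "v < r \<Longrightarrow> a*(r+s) + v < m*(r+s) \<Longrightarrow> a'*(r+s) + v' < m*(r+s) \<Longrightarrow>
  emb1 m r s A $$ (a*(r+s) + v, a'*(r+s) + v') = 0"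
  by (simp add: emb1_index)
lemma emb0_at1: "v < s \<Longrightarrow> a*(r+s) + (r+v) < m*(r+s) \<Longrightarrow> a'*(r+s) + v' < m*(r+s) \<Longrightarrow>
  emb0 m r s A $$ (a*(r+s) + (r+v), a'*(r+s) + v') = 0"
  by (simp add: emb0_index)
lemma emb1_at1: "v < s \<Longrightarrow> v' < s \<Longrightarrow> a*(r+s) + (r+v) < m*(r+s) \<Longrightarrow> a'*(r+s) + (r+v') < m*(r+s) \<Longrightarrow>
  emb1 m r s A $$ (a*(r+s) + (r+v), a'*(r+s) + (r+v')) = A $$ (a* s+v, a'* s+v')"
  by (simp add: emb1_index)

lemma lm_cmp0_emb:
  assumes A: "A \<in> carrier_mat (p*(m*r)) (p*(m*r))"
  shows "lift_map p (m*(r+s)) (m*r) (cmp0 m r s) (emb0 (p*m) r s A + emb1 (p*m) r s B) = A"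
proof (rule eq_matI)
  fix i j assume "i < dim_row A" "j < dim_col A"
  then have i: "i < p*(m*r)" and j: "j < p*(m*r)" using A by simp_all
  let ?N = "r+s"
  have key: "i div (m*r) * (m*?N) + (i mod (m*r) div r * ?N + i mod (m*r) mod r) = (i div (m*r) * m + i mod (m*r) div r) * ?N + i mod (m*r) mod r" for i
    by (simp add: algebra_simps)
  have key2: "(i div (m*r) * m + i mod (m*r) div r) * r + i mod (m*r) mod r = i" for i
  proof -
    have "(i div (m*r) * m + i mod (m*r) div r) * r + i mod (m*r) mod r = i div (m*r) * (m*r) + (i mod (m*r) div r * r + i mod (m*r) mod r)"
      by (simp add: algebra_simps)
    also have "\<dots> = i div (m*r) * (m*r) + i mod (m*r)" by (simp only: div_mult_mod_eq)
    also have "\<dots> = i" by (rule div_mult_mod_eq)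
    finally show ?thesis .
  qed
  have xi: "i mod (m*r) < m*r" and xj: "j mod (m*r) < m*r" using mod_lt[OF i] mod_lt[OF j] by auto
  have vi: "i mod (m*r) mod r < r" and vj: "j mod (m*r) mod r < r" using mod_lt[OF xi] mod_lt[OF xj] by auto
  have Z: "(k div (m*r) * m + k mod (m*r) div r) * ?N + k mod (m*r) mod r < p*m*?N" if k: "k < p*(m*r)" for k
  proof -
    have "k div (m*r) < p" using div_lt[OF k] .
    moreover have "k mod (m*r) div r < m" using div_lt[OF mod_lt[OF k]] .
    ultimately have "k div (m*r) * m + k mod (m*r) div r < p*m" using lt_mult_add by blast
    moreover have "k mod (m*r) mod r < ?N" using mod_lt[OF mod_lt[OF k]] by simp
    ultimately show ?thesis using lt_mult_add by blast
  qed
  have "lift_map p (m*(r+s)) (m*r) (cmp0 m r s) (emb0 (p*m) r s A + emb1 (p*m) r s B) $$ (i,j)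
     = (emb0 (p*m) r s A + emb1 (p*m) r s B) $$ ((i div (m*r) * m + i mod (m*r) div r) * ?N + i mod (m*r) mod r,
                                               (j div (m*r) * m + j mod (m*r) div r) * ?N + j mod (m*r) mod r)"
    using i j xi xj b2[OF xi] b2[OF xj] by (simp add: lm_index cmp0_index blkm_index key)
  also have "\<dots> = A $$ ((i div (m*r) * m + i mod (m*r) div r) * r + i mod (m*r) mod r, (j div (m*r) * m + j mod (m*r) div r) * r + j mod (m*r) mod r)"
    using Z[OF i] Z[OF j] vi vj by (simp add: emb0_at0 emb1_at0 del: mod_mod_cancel)
  also have "\<dots> = A $$ (i,j)" by (simp only: key2)
  finally show "lift_map p (m*(r+s)) (m*r) (cmp0 m r s) (emb0 (p*m) r s A + emb1 (p*m) r s B) $$ (i,j) = A $$ (i,j)" .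
qed (use A in simp_all)


lemma lm_cmp1_emb:
  assumes B: "B \<in> carrier_mat (p*(m * s)) (p*(m * s))"
  shows "lift_map p (m*(r+s)) (m * s) (cmp1 m r s) (emb0 (p*m) r s A + emb1 (p*m) r s B) = B"
proof (rule eq_matI)
  fix i j assume "i < dim_row B" "j < dim_col B"
  then have i: "i < p*(m * s)" and j: "j < p*(m * s)" using B by simp_all
  let ?N = "r+s"
  have key: "i div (m * s) * (m*?N) + (i mod (m * s) div s * ?N + (r + i mod (m * s) mod s)) = (i div (m * s) * m + i mod (m * s) div s) * ?N + (r + i mod (m * s) mod s)" for i
    by (simp add: algebra_simps)
  have key2: "(i div (m * s) * m + i mod (m * s) div s) * s + i mod (m * s) mod s = i" for i
  proof -
    have "(i div (m * s) * m + i mod (m * s) div s) * s + i mod (m * s) mod s = i div (m * s) * (m * s) + (i mod (m * s) div s * s + i mod (m * s) mod s)"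
      by (simp add: algebra_simps)
    also have "\<dots> = i div (m * s) * (m * s) + i mod (m * s)" by (simp only: div_mult_mod_eq)
    also have "\<dots> = i" by (rule div_mult_mod_eq)
    finally show ?thesis .
  qed
  have xi: "i mod (m * s) < m * s" and xj: "j mod (m * s) < m * s" using mod_lt[OF i] mod_lt[OF j] by auto
  have vi: "i mod (m * s) mod s < s" and vj: "j mod (m * s) mod s < s" using mod_lt[OF xi] mod_lt[OF xj] by auto
  have Z: "(k div (m * s) * m + k mod (m * s) div s) * ?N + (r + k mod (m * s) mod s) < p*m*?N" if k: "k < p*(m * s)" for k
  proof -
    have "k div (m * s) < p" using div_lt[OF k] .
    moreover have "k mod (m * s) div s < m" using div_lt[OF mod_lt[OF k]] .
    ultimately have "k div (m * s) * m + k mod (m * s) div s < p*m" using lt_mult_add by blast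
    moreover have "r + k mod (m * s) mod s < ?N" using mod_lt[OF mod_lt[OF k]] by simp
    ultimately show ?thesis using lt_mult_add by blast
  qed
  have "lift_map p (m*(r+s)) (m * s) (cmp1 m r s) (emb0 (p*m) r s A + emb1 (p*m) r s B) $$ (i,j)
     = (emb0 (p*m) r s A + emb1 (p*m) r s B) $$ ((i div (m * s) * m + i mod (m * s) div s) * ?N + (r + i mod (m * s) mod s),
                                               (j div (m * s) * m + j mod (m * s) div s) * ?N + (r + j mod (m * s) mod s))"
    using i j xi xj b3[OF xi] b3[OF xj] by (simp add: lm_index cmp1_index blkm_index key)
  also have "\<dots> = B $$ ((i div (m * s) * m + i mod (m * s) div s) * s + i mod (m * s) mod s, (j div (m * s) * m + j mod (m * s) div s) * s + j mod (m * s) mod s)"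
    using Z[OF i] Z[OF j] vi vj by (simp add: emb0_at1 emb1_at1 del: mod_mod_cancel)
  also have "\<dots> = B $$ (i,j)" by (simp only: key2)
  finally show "lift_map p (m*(r+s)) (m * s) (cmp1 m r s) (emb0 (p*m) r s A + emb1 (p*m) r s B) $$ (i,j) = B $$ (i,j)" .
qed (use B in simp_all)


definition comb :: "nat \<Rightarrow> nat \<Rightarrow> nat \<Rightarrow> (complex mat \<Rightarrow> complex mat) \<Rightarrow> (complex mat \<Rightarrow> complex mat)
   \<Rightarrow> (complex mat \<Rightarrow> complex mat) \<Rightarrow> (complex mat \<Rightarrow> complex mat) \<Rightarrow> complex mat \<Rightarrow> complex mat" where
  "comb dA r s C0 C1 P P' X = emb0 dA r s (P (C0 X)) + emb1 dA r s (P' (C1 X))"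

lemma mtrace_add: "A \<in> carrier_mat n n \<Longrightarrow> B \<in> carrier_mat n n \<Longrightarrow> mtrace (A + B) = mtrace A + mtrace B"
  unfolding mtrace_def by (simp add: sum.distrib)

lemma mtrace_smult: "A \<in> carrier_mat n n \<Longrightarrow> mtrace (c \<cdot>\<^sub>m A) = c * mtrace A"
  unfolding mtrace_def by (simp add: sum_distrib_left)

lemma add4: fixes a b c d :: "complex mat" shows "a \<in> carrier_mat n n \<Longrightarrow> b \<in> carrier_mat n n \<Longrightarrow> c \<in> carrier_mat n n \<Longrightarrow> d \<in> carrier_mat n n \<Longrightarrow>
  (a + b) + (c + d) = (a + c) + (b + d)"
  by (rule eq_matI) auto

lemma smult_add: fixes a b :: "complex mat" shows "a \<in> carrier_mat n n \<Longrightarrow> b \<in> carrier_mat n n \<Longrightarrow> k \<cdot>\<^sub>m (a + b) = k \<cdot>\<^sub>m a + k \<cdot>\<^sub>m b"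
  by (rule eq_matI) (auto simp: algebra_simps)

lemma cptp_cp: "cptp din dout P \<Longrightarrow> cp din dout P"
  unfolding cptp_def cp_def by blast

lemma cptp_mapsc: "cptp din dout P \<Longrightarrow> mapsc din dout P"
  unfolding cptp_def mapsc_def by blast

lemma cptp_comb:
  assumes P: "cptp d0 (dA*r) P" and P': "cptp d1 (dA * s) P'"
    and m0: "mapsc din d0 C0" and m1: "mapsc din d1 C1"
    and cp0: "cp din d0 C0" and cp1: "cp din d1 C1"
    and add0: "\<And>X Y. X \<in> carrier_mat din din \<Longrightarrow> Y \<in> carrier_mat din din \<Longrightarrow> C0 (X + Y) = C0 X + C0 Y"
    and add1: "\<And>X Y. X \<in> carrier_mat din din \<Longrightarrow> Y \<in> carrier_mat din din \<Longrightarrow> C1 (X + Y) = C1 X + C1 Y"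
    and sm0: "\<And>c X. X \<in> carrier_mat din din \<Longrightarrow> C0 (c \<cdot>\<^sub>m X) = c \<cdot>\<^sub>m C0 X"
    and sm1: "\<And>c X. X \<in> carrier_mat din din \<Longrightarrow> C1 (c \<cdot>\<^sub>m X) = c \<cdot>\<^sub>m C1 X"
    and tr: "\<And>X. X \<in> carrier_mat din din \<Longrightarrow> mtrace (C0 X) + mtrace (C1 X) = mtrace X"
  shows "cptp din (dA*(r+s)) (comb dA r s C0 C1 P P')"
proof -
  have Pc: "X \<in> carrier_mat d0 d0 \<Longrightarrow> P X \<in> carrier_mat (dA*r) (dA*r)" for X using P unfolding cptp_def by blast
  have P'c: "X \<in> carrier_mat d1 d1 \<Longrightarrow> P' X \<in> carrier_mat (dA * s) (dA * s)" for X using P' unfolding cptp_def by blast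
  have Padd: "X \<in> carrier_mat d0 d0 \<Longrightarrow> Y \<in> carrier_mat d0 d0 \<Longrightarrow> P (X + Y) = P X + P Y" for X Y using P unfolding cptp_def by blast
  have P'add: "X \<in> carrier_mat d1 d1 \<Longrightarrow> Y \<in> carrier_mat d1 d1 \<Longrightarrow> P' (X + Y) = P' X + P' Y" for X Y using P' unfolding cptp_def by blast
  have Psm: "X \<in> carrier_mat d0 d0 \<Longrightarrow> P (c \<cdot>\<^sub>m X) = c \<cdot>\<^sub>m P X" for X c using P unfolding cptp_def by blast
  have P'sm: "X \<in> carrier_mat d1 d1 \<Longrightarrow> P' (c \<cdot>\<^sub>m X) = c \<cdot>\<^sub>m P' X" for X c using P' unfolding cptp_def by blast
  have Ptr: "X \<in> carrier_mat d0 d0 \<Longrightarrow> mtrace (P X) = mtrace X" for X using P unfolding cptp_def by blast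
  have P'tr: "X \<in> carrier_mat d1 d1 \<Longrightarrow> mtrace (P' X) = mtrace X" for X using P' unfolding cptp_def by blast
  have C0c: "X \<in> carrier_mat din din \<Longrightarrow> C0 X \<in> carrier_mat d0 d0" for X using m0 unfolding mapsc_def by blast
  have C1c: "X \<in> carrier_mat din din \<Longrightarrow> C1 X \<in> carrier_mat d1 d1" for X using m1 unfolding mapsc_def by blast
  have PC0: "X \<in> carrier_mat din din \<Longrightarrow> P (C0 X) \<in> carrier_mat (dA*r) (dA*r)" for X using Pc C0c by blast
  have PC1: "X \<in> carrier_mat din din \<Longrightarrow> P' (C1 X) \<in> carrier_mat (dA * s) (dA * s)" for X using P'c C1c by blast
  have eq: "comb dA r s C0 C1 P P' = (\<lambda>X. (\<lambda>X. emb0 dA r s (P (C0 X))) X + (\<lambda>X. emb1 dA r s (P' (C1 X))) X)"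
    by (rule ext) (simp add: comb_def)
  have cpc: "cp din (dA*(r+s)) (comb dA r s C0 C1 P P')"
    unfolding eq
  proof (rule cp_add)
    show "mapsc din (dA * (r + s)) (\<lambda>X. emb0 dA r s (P (C0 X)))" "mapsc din (dA * (r + s)) (\<lambda>X. emb1 dA r s (P' (C1 X)))"
      unfolding mapsc_def by simp_all
    have mPC0: "mapsc din (dA*r) (\<lambda>X. P (C0 X))" using PC0 unfolding mapsc_def by blast
    have mPC1: "mapsc din (dA * s) (\<lambda>X. P' (C1 X))" using PC1 unfolding mapsc_def by blast
    show "cp din (dA * (r + s)) (\<lambda>X. emb0 dA r s (P (C0 X)))"
      by (rule cp_comp[OF mPC0 cp_comp[OF m0 cp0 cptp_cp[OF P]] cp_emb0])
    show "cp din (dA * (r + s)) (\<lambda>X. emb1 dA r s (P' (C1 X)))"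
      by (rule cp_comp[OF mPC1 cp_comp[OF m1 cp1 cptp_cp[OF P']] cp_emb1])
  qed
  show ?thesis unfolding cptp_def
  proof (intro conjI ballI allI impI)
    fix X :: "complex mat" assume X: "X \<in> carrier_mat din din"
    show "comb dA r s C0 C1 P P' X \<in> carrier_mat (dA * (r + s)) (dA * (r + s))" unfolding comb_def by simp
    show "mtrace (comb dA r s C0 C1 P P' X) = mtrace X"
      unfolding comb_def using X
      by (simp add: mtrace_add[OF emb0_carrier emb1_carrier] mtrace_emb0[OF PC0] mtrace_emb1[OF PC1] Ptr[OF C0c] P'tr[OF C1c] tr)
    fix c
    show "comb dA r s C0 C1 P P' (c \<cdot>\<^sub>m X) = c \<cdot>\<^sub>m comb dA r s C0 C1 P P' X"
      unfolding comb_def using X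
      by (simp add: sm0 sm1 Psm[OF C0c] P'sm[OF C1c] emb0_smult[OF PC0] emb1_smult[OF PC1] smult_add[OF emb0_carrier emb1_carrier])
  next
    fix X Y :: "complex mat" assume X: "X \<in> carrier_mat din din" and Y: "Y \<in> carrier_mat din din"
    show "comb dA r s C0 C1 P P' (X + Y) = comb dA r s C0 C1 P P' X + comb dA r s C0 C1 P P' Y"
      unfolding comb_def using X Y
      by (simp add: add0 add1 Padd[OF C0c C0c] P'add[OF C1c C1c] emb0_add[OF PC0 PC0] emb1_add[OF PC1 PC1]
          add4[OF emb0_carrier emb0_carrier emb1_carrier emb1_carrier])
  next
    fix k and X :: "complex mat" assume "psd (k * din) X"
    then show "psd (k * (dA * (r + s))) (lift_map k din (dA * (r + s)) (comb dA r s C0 C1 P P') X)"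
      using cpc unfolding cp_def by blast
  qed
qed


lemma ptrace_carrier[simp]: "ptrace m k X \<in> carrier_mat m m" unfolding ptrace_def by simp

lemma ptrace_smult: assumes "A \<in> carrier_mat (M*k) (M*k)" shows "ptrace M k (c \<cdot>\<^sub>m A) = c \<cdot>\<^sub>m ptrace M k A"
proof (rule eq_matI)
  fix i j assume "i < dim_row (c \<cdot>\<^sub>m ptrace M k A)" "j < dim_col (c \<cdot>\<^sub>m ptrace M k A)"
  then have i: "i < M" and j: "j < M" unfolding ptrace_def by simp_all
  have "l < k \<Longrightarrow> i * k + l < M*k" "l < k \<Longrightarrow> j * k + l < M*k" for l using lt_mult_add[OF i] lt_mult_add[OF j] by auto
  then show "ptrace M k (c \<cdot>\<^sub>m A) $$ (i, j) = (c \<cdot>\<^sub>m ptrace M k A) $$ (i, j)"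
    unfolding ptrace_def using i j assms by (simp add: sum_distrib_left)
qed (simp_all add: ptrace_def)

lemma ptrace_emb:
  assumes A: "A \<in> carrier_mat (M*dE*r) (M*dE*r)" and B: "B \<in> carrier_mat (M*dE* s) (M*dE* s)"
  shows "ptrace M (dE*(r+s)) (emb0 (M*dE) r s A + emb1 (M*dE) r s B) = ptrace M (dE*r) A + ptrace M (dE* s) B"
proof (rule eq_matI)
  fix i j assume "i < dim_row (ptrace M (dE*r) A + ptrace M (dE* s) B)" "j < dim_col (ptrace M (dE*r) A + ptrace M (dE* s) B)"
  then have i: "i < M" and j: "j < M" unfolding ptrace_def by simp_all
  let ?N = "r+s"
  have bd: "(k*dE + e)*?N + b < M*dE*?N" if "k < M" "e < dE" "b < ?N" for k e b
    using lt_mult_add[OF lt_mult_add[OF that(1) that(2)] that(3)] by simp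
  have ix: "k*(dE*?N) + (b + e*?N) = (k*dE + e)*?N + b" for k e b by (simp add: algebra_simps)
  have ix0: "k*(dE*r) + (b + e*r) = (k*dE + e)*r + b" for k e b by (simp add: algebra_simps)
  have ix1: "k*(dE * s) + (b + e * s) = (k*dE + e)* s + b" for k e b by (simp add: algebra_simps)
  have "ptrace M (dE*?N) (emb0 (M*dE) r s A + emb1 (M*dE) r s B) $$ (i,j)
     = (\<Sum>e<dE. \<Sum>b<?N. (emb0 (M*dE) r s A + emb1 (M*dE) r s B) $$ ((i*dE + e)*?N + b, (j*dE + e)*?N + b))"
    unfolding ptrace_def using i j by (simp add: sum_mult_product ix)
  also have "\<dots> = (\<Sum>e<dE. (\<Sum>b<r. A $$ ((i*dE + e)*r + b, (j*dE + e)*r + b)) + (\<Sum>b<s. B $$ ((i*dE + e)* s + b, (j*dE + e)* s + b)))"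
  proof (rule sum.cong[OF refl])
    fix e assume e: "e \<in> {..<dE}"
    have "(\<Sum>b<?N. (emb0 (M*dE) r s A + emb1 (M*dE) r s B) $$ ((i*dE + e)*?N + b, (j*dE + e)*?N + b))
       = (\<Sum>b<r. (emb0 (M*dE) r s A + emb1 (M*dE) r s B) $$ ((i*dE + e)*?N + b, (j*dE + e)*?N + b))
       + (\<Sum>b<s. (emb0 (M*dE) r s A + emb1 (M*dE) r s B) $$ ((i*dE + e)*?N + (r+b), (j*dE + e)*?N + (r+b)))"
      by (rule sum_add_split)
    also have "\<dots> = (\<Sum>b<r. A $$ ((i*dE + e)*r + b, (j*dE + e)*r + b)) + (\<Sum>b<s. B $$ ((i*dE + e)* s + b, (j*dE + e)* s + b))"
    proof (intro arg_cong2[where f = "(+)"] sum.cong refl)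
      fix b assume b: "b \<in> {..<r}"
      have "(i*dE + e)*?N + b < M*dE*?N" "(j*dE + e)*?N + b < M*dE*?N" using bd i j e b by auto
      then show "(emb0 (M*dE) r s A + emb1 (M*dE) r s B) $$ ((i*dE + e)*?N + b, (j*dE + e)*?N + b) = A $$ ((i*dE + e)*r + b, (j*dE + e)*r + b)"
        using b by (simp add: emb0_at0 emb1_at0)
    next
      fix b assume b: "b \<in> {..<s}"
      have "(i*dE + e)*?N + (r+b) < M*dE*?N" "(j*dE + e)*?N + (r+b) < M*dE*?N" using bd i j e b by auto
      then show "(emb0 (M*dE) r s A + emb1 (M*dE) r s B) $$ ((i*dE + e)*?N + (r+b), (j*dE + e)*?N + (r+b)) = B $$ ((i*dE + e)* s + b, (j*dE + e)* s + b)"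
        using b by (simp add: emb0_at1 emb1_at1)
    qed
    finally show "(\<Sum>b<?N. (emb0 (M*dE) r s A + emb1 (M*dE) r s B) $$ ((i*dE + e)*?N + b, (j*dE + e)*?N + b)) = (\<Sum>b<r. A $$ ((i*dE + e)*r + b, (j*dE + e)*r + b)) + (\<Sum>b<s. B $$ ((i*dE + e)* s + b, (j*dE + e)* s + b))" .
  qed
  also have "\<dots> = (ptrace M (dE*r) A + ptrace M (dE * s) B) $$ (i,j)"
    unfolding ptrace_def using i j by (simp add: sum_mult_product ix0 ix1 sum.distrib)
  finally show "ptrace M (dE*?N) (emb0 (M*dE) r s A + emb1 (M*dE) r s B) $$ (i,j) = (ptrace M (dE*r) A + ptrace M (dE * s) B) $$ (i,j)" .
qed (simp_all add: ptrace_def)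

lemma seq_state_Suc: "seq_state dA dB dE W r P (Suc i) = KK (dB^i) W (r (Suc i)) * lift_map (dB ^ i) (reg_dim dE r i) (dA * r (Suc i)) (P (Suc i)) (seq_state dA dB dE W r P i) * dagger (KK (dB^i) W (r (Suc i)))"
  by (simp add: KK_def Let_def)

lemma seq_state_carrier:
  assumes W: "W \<in> carrier_mat (dB*dE) dA"
  shows "seq_state dA dB dE W r P i \<in> carrier_mat (dB^i * reg_dim dE r i) (dB^i * reg_dim dE r i)"
proof (induct i)
  case 0 then show ?case by (simp add: reg_dim_def)
next
  case (Suc i)
  have K: "KK (dB^i) W (r (Suc i)) \<in> carrier_mat (dB^i*(dB*dE)*r (Suc i)) (dB^i*dA*r (Suc i))" by (rule KK_carrier[OF W])
  have L: "lift_map (dB ^ i) (reg_dim dE r i) (dA * r (Suc i)) (P (Suc i)) (seq_state dA dB dE W r P i) \<in> carrier_mat (dB^i*dA*r (Suc i)) (dB^i*dA*r (Suc i))"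
    using lm_carrier by (simp add: mult.assoc)
  have "KK (dB^i) W (r (Suc i)) * lift_map (dB ^ i) (reg_dim dE r i) (dA * r (Suc i)) (P (Suc i)) (seq_state dA dB dE W r P i) * dagger (KK (dB^i) W (r (Suc i)))
    \<in> carrier_mat (dB^i*(dB*dE)*r (Suc i)) (dB^i*(dB*dE)*r (Suc i))"
    using K L dagger_carrier[OF K] by (meson mult_carrier_mat)
  moreover have "dB^i*(dB*dE)*r (Suc i) = dB ^ Suc i * reg_dim dE r (Suc i)" by (simp add: reg_dim_def ac_simps)
  ultimately show ?case by (simp only: seq_state_Suc)
qed


lemma conj_smult:
  assumes K: "K \<in> carrier_mat a b" and L: "L \<in> carrier_mat b b"
  shows "K * (c \<cdot>\<^sub>m L) * dagger K = c \<cdot>\<^sub>m (K * L * dagger K)"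
proof -
  have "K * (c \<cdot>\<^sub>m L) = c \<cdot>\<^sub>m (K * L)" using mult_smult_distrib[OF K L] .
  moreover have "K * L \<in> carrier_mat a b" using K L by simp
  ultimately show ?thesis using mult_smult_assoc_mat dagger_carrier[OF K] by metis
qed

lemma conj_add:
  assumes K: "K \<in> carrier_mat a b" and A: "A \<in> carrier_mat b b" and B: "B \<in> carrier_mat b b"
  shows "K * (A + B) * dagger K = K * A * dagger K + K * B * dagger K"
proof -
  have "K * (A + B) = K * A + K * B" using mult_add_distrib_mat[OF K A B] .
  moreover have "K * A \<in> carrier_mat a b" "K * B \<in> carrier_mat a b" using K A B by simp_all
  ultimately show ?thesis using add_mult_distrib_mat dagger_carrier[OF K] by metis
qed

lemma step_lemma:
  assumes W: "W \<in> carrier_mat (dB*dE) dA"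
    and P0: "cptp d0 (dA*\<rho>) P0" and P1: "cptp d1 (dA*\<rho>') P1"
    and mC0: "mapsc din d0 C0" and mC1: "mapsc din d1 C1"
    and S0: "S \<in> carrier_mat (p*d0) (p*d0)" and S1: "S' \<in> carrier_mat (p*d1) (p*d1)"
    and h0: "lift_map p din d0 C0 X = c0 \<cdot>\<^sub>m S" and h1: "lift_map p din d1 C1 X = c1 \<cdot>\<^sub>m S'"
  shows "KK p W (\<rho>+\<rho>') * lift_map p din (dA*(\<rho>+\<rho>')) (comb dA \<rho> \<rho>' C0 C1 P0 P1) X * dagger (KK p W (\<rho>+\<rho>'))
     = emb0 (p*(dB*dE)) \<rho> \<rho>' (c0 \<cdot>\<^sub>m (KK p W \<rho> * lift_map p d0 (dA*\<rho>) P0 S * dagger (KK p W \<rho>)))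
     + emb1 (p*(dB*dE)) \<rho> \<rho>' (c1 \<cdot>\<^sub>m (KK p W \<rho>' * lift_map p d1 (dA*\<rho>') P1 S' * dagger (KK p W \<rho>')))"
proof -
  let ?N = "\<rho>+\<rho>'"
  have mP0: "mapsc d0 (dA*\<rho>) P0" and mP1: "mapsc d1 (dA*\<rho>') P1" using cptp_mapsc P0 P1 by auto
  have hom0: "\<And>c X. X \<in> carrier_mat d0 d0 \<Longrightarrow> P0 (c \<cdot>\<^sub>m X) = c \<cdot>\<^sub>m P0 X" using P0 unfolding cptp_def by blast
  have hom1: "\<And>c X. X \<in> carrier_mat d1 d1 \<Longrightarrow> P1 (c \<cdot>\<^sub>m X) = c \<cdot>\<^sub>m P1 X" using P1 unfolding cptp_def by blast
  have mPC0: "mapsc din (dA*\<rho>) (\<lambda>X. P0 (C0 X))" using mP0 mC0 unfolding mapsc_def by blast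
  have mPC1: "mapsc din (dA*\<rho>') (\<lambda>X. P1 (C1 X))" using mP1 mC1 unfolding mapsc_def by blast
  have eq: "comb dA \<rho> \<rho>' C0 C1 P0 P1 = (\<lambda>X. (\<lambda>X. emb0 dA \<rho> \<rho>' (P0 (C0 X))) X + (\<lambda>X. emb1 dA \<rho> \<rho>' (P1 (C1 X))) X)"
    by (rule ext) (simp add: comb_def)
  define L0 where "L0 = lift_map p d0 (dA*\<rho>) P0 S"
  define L1 where "L1 = lift_map p d1 (dA*\<rho>') P1 S'"
  have L0c: "L0 \<in> carrier_mat (p*(dA*\<rho>)) (p*(dA*\<rho>))" unfolding L0_def by simp
  have L1c: "L1 \<in> carrier_mat (p*(dA*\<rho>')) (p*(dA*\<rho>'))" unfolding L1_def by simp
  have "lift_map p din (dA*?N) (\<lambda>X. emb0 dA \<rho> \<rho>' (P0 (C0 X))) X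
     = lift_map p (dA*\<rho>) (dA*?N) (emb0 dA \<rho> \<rho>') (lift_map p d0 (dA*\<rho>) P0 (lift_map p din d0 C0 X))"
    using lm_comp[OF mPC0] lm_comp[OF mC0] by metis
  also have "\<dots> = lift_map p (dA*\<rho>) (dA*?N) (emb0 dA \<rho> \<rho>') (c0 \<cdot>\<^sub>m L0)"
    by (simp only: h0 L0_def lm_scale[OF hom0 mP0 S0])
  also have "\<dots> = emb0 (p*dA) \<rho> \<rho>' (c0 \<cdot>\<^sub>m L0)"
    by (rule lm_emb0) (use L0c in simp)
  finally have E0: "lift_map p din (dA*?N) (\<lambda>X. emb0 dA \<rho> \<rho>' (P0 (C0 X))) X = emb0 (p*dA) \<rho> \<rho>' (c0 \<cdot>\<^sub>m L0)" .
  have "lift_map p din (dA*?N) (\<lambda>X. emb1 dA \<rho> \<rho>' (P1 (C1 X))) X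
     = lift_map p (dA*\<rho>') (dA*?N) (emb1 dA \<rho> \<rho>') (lift_map p d1 (dA*\<rho>') P1 (lift_map p din d1 C1 X))"
    using lm_comp[OF mPC1] lm_comp[OF mC1] by metis
  also have "\<dots> = lift_map p (dA*\<rho>') (dA*?N) (emb1 dA \<rho> \<rho>') (c1 \<cdot>\<^sub>m L1)"
    by (simp only: h1 L1_def lm_scale[OF hom1 mP1 S1])
  also have "\<dots> = emb1 (p*dA) \<rho> \<rho>' (c1 \<cdot>\<^sub>m L1)"
    by (rule lm_emb1) (use L1c in simp)
  finally have E1: "lift_map p din (dA*?N) (\<lambda>X. emb1 dA \<rho> \<rho>' (P1 (C1 X))) X = emb1 (p*dA) \<rho> \<rho>' (c1 \<cdot>\<^sub>m L1)" .
  have mF0: "mapsc din (dA*?N) (\<lambda>X. emb0 dA \<rho> \<rho>' (P0 (C0 X)))" and mF1: "mapsc din (dA*?N) (\<lambda>X. emb1 dA \<rho> \<rho>' (P1 (C1 X)))"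
    unfolding mapsc_def by simp_all
  have LM: "lift_map p din (dA*?N) (comb dA \<rho> \<rho>' C0 C1 P0 P1) X = emb0 (p*dA) \<rho> \<rho>' (c0 \<cdot>\<^sub>m L0) + emb1 (p*dA) \<rho> \<rho>' (c1 \<cdot>\<^sub>m L1)"
    unfolding eq lm_add[OF mF0 mF1] E0 E1 ..
  have K: "KK p W ?N \<in> carrier_mat (p*(dB*dE)*?N) (p*dA*?N)" by (rule KK_carrier[OF W])
  have K0: "KK p W \<rho> \<in> carrier_mat (p*(dB*dE)*\<rho>) (p*dA*\<rho>)" by (rule KK_carrier[OF W])
  have K1: "KK p W \<rho>' \<in> carrier_mat (p*(dB*dE)*\<rho>') (p*dA*\<rho>')" by (rule KK_carrier[OF W])
  have L0c': "L0 \<in> carrier_mat (p*dA*\<rho>) (p*dA*\<rho>)" using L0c by (simp add: mult.assoc)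
  have L1c': "L1 \<in> carrier_mat (p*dA*\<rho>') (p*dA*\<rho>')" using L1c by (simp add: mult.assoc)
  have "KK p W ?N * (emb0 (p*dA) \<rho> \<rho>' (c0 \<cdot>\<^sub>m L0) + emb1 (p*dA) \<rho> \<rho>' (c1 \<cdot>\<^sub>m L1)) * dagger (KK p W ?N)
     = KK p W ?N * emb0 (p*dA) \<rho> \<rho>' (c0 \<cdot>\<^sub>m L0) * dagger (KK p W ?N) + KK p W ?N * emb1 (p*dA) \<rho> \<rho>' (c1 \<cdot>\<^sub>m L1) * dagger (KK p W ?N)"
    by (rule conj_add[OF K]) simp_all
  also have "\<dots> = emb0 (p*(dB*dE)) \<rho> \<rho>' (KK p W \<rho> * (c0 \<cdot>\<^sub>m L0) * dagger (KK p W \<rho>)) + emb1 (p*(dB*dE)) \<rho> \<rho>' (KK p W \<rho>' * (c1 \<cdot>\<^sub>m L1) * dagger (KK p W \<rho>'))"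
    using conj_emb0[OF W, of "c0 \<cdot>\<^sub>m L0" p \<rho> \<rho>'] conj_emb1[OF W, of "c1 \<cdot>\<^sub>m L1" p \<rho>' \<rho>] L0c' L1c' by simp
  also have "\<dots> = emb0 (p*(dB*dE)) \<rho> \<rho>' (c0 \<cdot>\<^sub>m (KK p W \<rho> * L0 * dagger (KK p W \<rho>))) + emb1 (p*(dB*dE)) \<rho> \<rho>' (c1 \<cdot>\<^sub>m (KK p W \<rho>' * L1 * dagger (KK p W \<rho>')))"
    using conj_smult[OF K0 L0c'] conj_smult[OF K1 L1c'] by simp
  finally show ?thesis unfolding LM L0_def L1_def .
qed


lemma smult_comm: fixes X :: "complex mat" shows "a \<cdot>\<^sub>m (b \<cdot>\<^sub>m X) = b \<cdot>\<^sub>m (a \<cdot>\<^sub>m X)"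
  by (rule eq_matI) auto

lemma cptp_first:
  assumes P: "cptp 1 (dA*r) P" and P': "cptp 1 (dA * s) P'" and t0: "0 \<le> t" and t1: "t \<le> 1"
  shows "cptp 1 (dA*(r+s)) (comb dA r s (\<lambda>X. complex_of_real t \<cdot>\<^sub>m X) (\<lambda>X. complex_of_real (1-t) \<cdot>\<^sub>m X) P P')"
proof (rule cptp_comb[OF P P'])
  show "mapsc 1 1 (\<lambda>X. complex_of_real t \<cdot>\<^sub>m X)" "mapsc 1 1 (\<lambda>X. complex_of_real (1-t) \<cdot>\<^sub>m X)"
    unfolding mapsc_def by auto
  show "cp 1 1 (\<lambda>X. complex_of_real t \<cdot>\<^sub>m X)" using cp_smult t0 by blast
  show "cp 1 1 (\<lambda>X. complex_of_real (1-t) \<cdot>\<^sub>m X)" using cp_smult[of "1-t" 1] t1 by simp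
  fix X :: "complex mat" assume X: "X \<in> carrier_mat 1 1"
  show "mtrace (complex_of_real t \<cdot>\<^sub>m X) + mtrace (complex_of_real (1-t) \<cdot>\<^sub>m X) = mtrace X"
    using X by (simp add: mtrace_smult[OF X] algebra_simps)
  fix c show "complex_of_real t \<cdot>\<^sub>m (c \<cdot>\<^sub>m X) = c \<cdot>\<^sub>m (complex_of_real t \<cdot>\<^sub>m X)" by (rule smult_comm)
  show "complex_of_real (1-t) \<cdot>\<^sub>m (c \<cdot>\<^sub>m X) = c \<cdot>\<^sub>m (complex_of_real (1-t) \<cdot>\<^sub>m X)" by (rule smult_comm)
next
  fix X Y :: "complex mat" assume X: "X \<in> carrier_mat 1 1" and Y: "Y \<in> carrier_mat 1 1"
  show "complex_of_real t \<cdot>\<^sub>m (X + Y) = complex_of_real t \<cdot>\<^sub>m X + complex_of_real t \<cdot>\<^sub>m Y" by (rule smult_add[OF X Y])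
  show "complex_of_real (1-t) \<cdot>\<^sub>m (X + Y) = complex_of_real (1-t) \<cdot>\<^sub>m X + complex_of_real (1-t) \<cdot>\<^sub>m Y" by (rule smult_add[OF X Y])
qed

lemma cptp_later:
  assumes P: "cptp (dE*p0) (dA*r) P" and P': "cptp (dE*q0) (dA * s) P'"
  shows "cptp (dE*(p0+q0)) (dA*(r+s)) (comb dA r s (cmp0 dE p0 q0) (cmp1 dE p0 q0) P P')"
proof (rule cptp_comb[OF P P'])
  show "mapsc (dE*(p0+q0)) (dE*p0) (cmp0 dE p0 q0)" "mapsc (dE*(p0+q0)) (dE*q0) (cmp1 dE p0 q0)"
    unfolding mapsc_def by auto
  show "cp (dE*(p0+q0)) (dE*p0) (cmp0 dE p0 q0)" by (rule cp_cmp0)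
  show "cp (dE*(p0+q0)) (dE*q0) (cmp1 dE p0 q0)" by (rule cp_cmp1)
  fix X :: "complex mat" assume X: "X \<in> carrier_mat (dE*(p0+q0)) (dE*(p0+q0))"
  show "mtrace (cmp0 dE p0 q0 X) + mtrace (cmp1 dE p0 q0 X) = mtrace X" by (rule mtrace_cmp[OF X])
  fix c show "cmp0 dE p0 q0 (c \<cdot>\<^sub>m X) = c \<cdot>\<^sub>m cmp0 dE p0 q0 X" by (rule cmp0_smult[OF X])
  show "cmp1 dE p0 q0 (c \<cdot>\<^sub>m X) = c \<cdot>\<^sub>m cmp1 dE p0 q0 X" by (rule cmp1_smult[OF X])
next
  fix X Y :: "complex mat" assume X: "X \<in> carrier_mat (dE*(p0+q0)) (dE*(p0+q0))" and Y: "Y \<in> carrier_mat (dE*(p0+q0)) (dE*(p0+q0))"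
  show "cmp0 dE p0 q0 (X + Y) = cmp0 dE p0 q0 X + cmp0 dE p0 q0 Y" by (rule cmp0_add[OF X Y])
  show "cmp1 dE p0 q0 (X + Y) = cmp1 dE p0 q0 X + cmp1 dE p0 q0 Y" by (rule cmp1_add[OF X Y])
qed


lemma main_comb:
  fixes W :: "complex mat" and t :: real
  assumes W: "W \<in> carrier_mat (dB*dE) dA" and t0: "0 \<le> t" and t1: "t \<le> 1"
    and V1: "\<forall>i. 1 \<le> i \<and> i \<le> n \<longrightarrow> 0 < r i \<and> cptp (reg_dim dE r (i - 1)) (dA * r i) (P i)"
    and V2: "\<forall>i. 1 \<le> i \<and> i \<le> n \<longrightarrow> 0 < r' i \<and> cptp (reg_dim dE r' (i - 1)) (dA * r' i) (P' i)"
    and n: "1 \<le> n"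
  shows "complex_of_real t \<cdot>\<^sub>m seq_output dA dB dE W r P n + complex_of_real (1 - t) \<cdot>\<^sub>m seq_output dA dB dE W r' P' n
     \<in> seq_set dA dB dE W n"
proof -
  define R where "R i = r i + r' i" for i
  define C0 where "C0 i = (if i = Suc 0 then (\<lambda>X. complex_of_real t \<cdot>\<^sub>m X) else cmp0 dE (r (i-1)) (r' (i-1)))" for i
  define C1 where "C1 i = (if i = Suc 0 then (\<lambda>X. complex_of_real (1-t) \<cdot>\<^sub>m X) else cmp1 dE (r (i-1)) (r' (i-1)))" for i
  define Q where "Q i = comb dA (r i) (r' i) (C0 i) (C1 i) (P i) (P' i)" for i
  let ?S = "seq_state dA dB dE W r P"
  let ?S' = "seq_state dA dB dE W r' P'"
  let ?S'' = "seq_state dA dB dE W R Q"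
  have VQ: "\<forall>i. 1 \<le> i \<and> i \<le> n \<longrightarrow> 0 < R i \<and> cptp (reg_dim dE R (i - 1)) (dA * R i) (Q i)"
  proof (intro allI impI)
    fix i assume i: "1 \<le> i \<and> i \<le> n"
    have Pi: "cptp (reg_dim dE r (i - 1)) (dA * r i) (P i)" and P'i: "cptp (reg_dim dE r' (i - 1)) (dA * r' i) (P' i)"
      and pos: "0 < r i" using V1 V2 i by auto
    have "cptp (reg_dim dE R (i - 1)) (dA * R i) (Q i)"
    proof (cases "i = Suc 0")
      case True
      then show ?thesis using cptp_first[of dA "r i" "P i" "r' i" "P' i" t] Pi P'i t0 t1
        by (simp add: reg_dim_def R_def Q_def C0_def C1_def)
    next
      case False
      then show ?thesis using cptp_later[of dE "r (i-1)" dA "r i" "P i" "r' (i-1)" "r' i" "P' i"] Pi P'i i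
        by (simp add: reg_dim_def R_def Q_def C0_def C1_def)
    qed
    then show "0 < R i \<and> cptp (reg_dim dE R (i - 1)) (dA * R i) (Q i)" using pos by (simp add: R_def)
  qed
  have mC0: "mapsc (reg_dim dE R i) (reg_dim dE r i) (C0 (Suc i))" for i
    by (cases "i = 0") (auto simp: mapsc_def C0_def reg_dim_def R_def)
  have mC1: "mapsc (reg_dim dE R i) (reg_dim dE r' i) (C1 (Suc i))" for i
    by (cases "i = 0") (auto simp: mapsc_def C1_def reg_dim_def R_def)
  have inv: "Suc 0 \<le> i \<Longrightarrow> i \<le> n \<Longrightarrow> ?S'' i = emb0 (dB^i*dE) (r i) (r' i) (complex_of_real t \<cdot>\<^sub>m ?S i)
       + emb1 (dB^i*dE) (r i) (r' i) (complex_of_real (1-t) \<cdot>\<^sub>m ?S' i)" for i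
  proof (induct i)
    case 0 then show ?case by simp
  next
    case (Suc i)
    have Sc: "?S i \<in> carrier_mat (dB^i * reg_dim dE r i) (dB^i * reg_dim dE r i)" by (rule seq_state_carrier[OF W])
    have S'c: "?S' i \<in> carrier_mat (dB^i * reg_dim dE r' i) (dB^i * reg_dim dE r' i)" by (rule seq_state_carrier[OF W])
    have h: "lift_map (dB^i) (reg_dim dE R i) (reg_dim dE r i) (C0 (Suc i)) (?S'' i) = complex_of_real t \<cdot>\<^sub>m ?S i
      \<and> lift_map (dB^i) (reg_dim dE R i) (reg_dim dE r' i) (C1 (Suc i)) (?S'' i) = complex_of_real (1-t) \<cdot>\<^sub>m ?S' i"
    proof (cases "i = 0")
      case True
      then show ?thesis using lm_smult_id[of "1\<^sub>m 1" 1 1] by (simp add: C0_def C1_def reg_dim_def)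
    next
      case False
      then have IH: "?S'' i = emb0 (dB^i*dE) (r i) (r' i) (complex_of_real t \<cdot>\<^sub>m ?S i)
       + emb1 (dB^i*dE) (r i) (r' i) (complex_of_real (1-t) \<cdot>\<^sub>m ?S' i)" using Suc by simp
      have A: "complex_of_real t \<cdot>\<^sub>m ?S i \<in> carrier_mat (dB^i*(dE*r i)) (dB^i*(dE*r i))" using Sc False by (simp add: reg_dim_def)
      have B: "complex_of_real (1-t) \<cdot>\<^sub>m ?S' i \<in> carrier_mat (dB^i*(dE * r' i)) (dB^i*(dE * r' i))" using S'c False by (simp add: reg_dim_def)
      show ?thesis unfolding IH using False lm_cmp0_emb[OF A, of "r' i"] lm_cmp1_emb[OF B, of "r i"]
        by (simp add: C0_def C1_def reg_dim_def R_def)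
    qed
    have Pc: "cptp (reg_dim dE r i) (dA * r (Suc i)) (P (Suc i))" and P'c: "cptp (reg_dim dE r' i) (dA * r' (Suc i)) (P' (Suc i))"
      using V1 V2 Suc by auto
    have "?S'' (Suc i) = KK (dB^i) W (R (Suc i)) * lift_map (dB ^ i) (reg_dim dE R i) (dA * R (Suc i)) (Q (Suc i)) (?S'' i) * dagger (KK (dB^i) W (R (Suc i)))"
      by (rule seq_state_Suc)
    also have "\<dots> = emb0 (dB^i*(dB*dE)) (r (Suc i)) (r' (Suc i)) (complex_of_real t \<cdot>\<^sub>m (KK (dB^i) W (r (Suc i)) * lift_map (dB^i) (reg_dim dE r i) (dA*r (Suc i)) (P (Suc i)) (?S i) * dagger (KK (dB^i) W (r (Suc i)))))
     + emb1 (dB^i*(dB*dE)) (r (Suc i)) (r' (Suc i)) (complex_of_real (1-t) \<cdot>\<^sub>m (KK (dB^i) W (r' (Suc i)) * lift_map (dB^i) (reg_dim dE r' i) (dA*r' (Suc i)) (P' (Suc i)) (?S' i) * dagger (KK (dB^i) W (r' (Suc i)))))"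
    proof -
      have RS: "R (Suc i) = r (Suc i) + r' (Suc i)" by (simp add: R_def)
      have QS: "Q (Suc i) = comb dA (r (Suc i)) (r' (Suc i)) (C0 (Suc i)) (C1 (Suc i)) (P (Suc i)) (P' (Suc i))" by (simp add: Q_def)
      show ?thesis unfolding RS QS by (rule step_lemma[OF W Pc P'c mC0 mC1 Sc S'c h[THEN conjunct1] h[THEN conjunct2]])
    qed
    also have "\<dots> = emb0 (dB^Suc i*dE) (r (Suc i)) (r' (Suc i)) (complex_of_real t \<cdot>\<^sub>m ?S (Suc i))
       + emb1 (dB^Suc i*dE) (r (Suc i)) (r' (Suc i)) (complex_of_real (1-t) \<cdot>\<^sub>m ?S' (Suc i))"
    proof -
      have "dB^i*(dB*dE) = dB^Suc i*dE" by (simp add: ac_simps)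
      then show ?thesis by (simp only: seq_state_Suc)
    qed
    finally show ?case .
  qed
  have Sn: "?S n \<in> carrier_mat (dB^n*(dE*r n)) (dB^n*(dE*r n))" using seq_state_carrier[OF W, of r P n] n by (simp add: reg_dim_def)
  have S'n: "?S' n \<in> carrier_mat (dB^n*(dE * r' n)) (dB^n*(dE * r' n))" using seq_state_carrier[OF W, of r' P' n] n by (simp add: reg_dim_def)
  have "seq_output dA dB dE W R Q n = ptrace (dB^n) (dE*(r n + r' n)) (emb0 (dB^n*dE) (r n) (r' n) (complex_of_real t \<cdot>\<^sub>m ?S n)
       + emb1 (dB^n*dE) (r n) (r' n) (complex_of_real (1-t) \<cdot>\<^sub>m ?S' n))"
    unfolding seq_output_def using inv[of n] n by (simp add: reg_dim_def R_def)
  also have "\<dots> = ptrace (dB^n) (dE*r n) (complex_of_real t \<cdot>\<^sub>m ?S n) + ptrace (dB^n) (dE * r' n) (complex_of_real (1-t) \<cdot>\<^sub>m ?S' n)"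
    by (rule ptrace_emb) (use Sn S'n in \<open>simp_all add: mult.assoc\<close>)
  also have "\<dots> = complex_of_real t \<cdot>\<^sub>m seq_output dA dB dE W r P n + complex_of_real (1 - t) \<cdot>\<^sub>m seq_output dA dB dE W r' P' n"
    unfolding seq_output_def using n ptrace_smult[OF Sn] ptrace_smult[OF S'n] by (simp add: reg_dim_def)
  finally have eq: "seq_output dA dB dE W R Q n = complex_of_real t \<cdot>\<^sub>m seq_output dA dB dE W r P n + complex_of_real (1 - t) \<cdot>\<^sub>m seq_output dA dB dE W r' P' n" .
  show ?thesis unfolding seq_set_def
    by (rule CollectI, rule exI[where x=R], rule exI[where x=Q]) (use eq VQ in auto)
qed

lemma convex_gen:
  assumes W: "W \<in> carrier_mat (dB*dE) dA" and n: "1 \<le> n"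
  shows "convex_mat_set (seq_set dA dB dE W n)"
  unfolding convex_mat_set_def
proof (intro ballI allI impI)
  fix x y t assume x: "x \<in> seq_set dA dB dE W n" and y: "y \<in> seq_set dA dB dE W n" and t: "0 \<le> (t::real) \<and> t \<le> 1"
  obtain r P where xr: "x = seq_output dA dB dE W r P n" and V1: "\<forall>i. 1 \<le> i \<and> i \<le> n \<longrightarrow> 0 < r i \<and> cptp (reg_dim dE r (i - 1)) (dA * r i) (P i)"
    using x unfolding seq_set_def by blast
  obtain r' P' where yr: "y = seq_output dA dB dE W r' P' n" and V2: "\<forall>i. 1 \<le> i \<and> i \<le> n \<longrightarrow> 0 < r' i \<and> cptp (reg_dim dE r' (i - 1)) (dA * r' i) (P' i)"
    using y unfolding seq_set_def by blast
  show "complex_of_real t \<cdot>\<^sub>m x + complex_of_real (1 - t) \<cdot>\<^sub>m y \<in> seq_set dA dB dE W n"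
    unfolding xr yr using main_comb[OF W _ _ V1 V2 n] t by blast
qed

theorem lemma4:
  fixes dA dB dE n :: nat and U V :: "complex mat"
  assumes "U \<in> carrier_mat (dB * dE) dA"
    and "dagger U * U = 1\<^sub>m dA"
    and "V \<in> carrier_mat (dB * dE) dA"
    and "1 \<le> n"
  shows "convex_mat_set (seq_set dA dB dE U n) \<and> convex_mat_set (seq_set dA dB dE V n)"
  using convex_gen[OF assms(1) assms(4)] convex_gen[OF assms(3) assms(4)] by blast

end
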